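(* Let $A$ be a finite set, $\Omega=A^{\mathbb{Z}}$ with Borel $\sigma$-algebra, $T$ the left shift, $\mu\in\Delta(\Omega)$ stationary, and $\mathcal{D}$ a shift-invariant $\sigma$-algebra of Borel subsets of $\Omega$. Then, $\mu$-almost surely, $$\bigl\|\mu(\zeta_n=\cdot\mid\mathcal{F}_0^n\vee\mathcal{D})-\mu(\zeta_n=\cdot\mid\mathcal{F}_{-\infty}^n\vee\mathcal{D})\bigr\|\xrightarrow[n\to\infty]{}0$$ in the strong Cesaro sense, i.e. $\frac1N\sum_{n=0}^{N-1}\|\mu(\zeta_n=\cdot\mid\mathcal{F}_0^n\vee\mathcal{D})-\mu(\zeta_n=\cdot\mid\mathcal{F}_{-\infty}^n\vee\mathcal{D})\|\to0$ $\mu$-a.s.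
   Context: $\zeta_n:\Omega\to A$ is the $n$-th coordinate and $T(\omega)_n=\omega_{n+1}$. For $-\infty\le m<k\le\infty$, $\mathcal{F}_m^k$ is the $\sigma$-algebra generated by $\zeta_j$, $m\le j<k$. $\mu(\zeta_n=\cdot\mid\mathcal{G})$ denotes (a version of) the conditional distribution of $\zeta_n$ given $\mathcal{G}$, a $\Delta(A)$-valued random variable; $\vee$ is the join of $\sigma$-algebras. $\mathcal{D}$ shift-invariant means $S\in\mathcal{D}\iff T(S)\in\mathcal{D}$ for every Borel $S$. For $p,q\in\Delta(A)$, $\|p-q\|=\max_a|p[a]-q[a]|$. *)

theory Defs
  imports "HOL-Probability.Probability"
begin

text \<open>The sequence space Omega = A^Z with its Borel (= product) sigma-algebra.\<close>
definition seq_space :: "(int \<Rightarrow> 'a) measure" where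
  "seq_space = PiM UNIV (\<lambda>_. count_space UNIV)"

definition shift :: "(int \<Rightarrow> 'a) \<Rightarrow> (int \<Rightarrow> 'a)" where
  "shift \<omega> = (\<lambda>n. \<omega> (n + 1))"

definition coord_sets :: "int set \<Rightarrow> (int \<Rightarrow> 'a) set set" where
  "coord_sets J = sigma_sets UNIV {(\<lambda>\<omega>. \<omega> j) -` B | j B. j \<in> J}"

definition join_alg :: "int set \<Rightarrow> (int \<Rightarrow> 'a) set set \<Rightarrow> (int \<Rightarrow> 'a) measure" where
  "join_alg J D = sigma UNIV (coord_sets J \<union> D)"

definition cond_dist :: "(int \<Rightarrow> 'a) measure \<Rightarrow> (int \<Rightarrow> 'a) measure \<Rightarrow> int \<Rightarrow> (int \<Rightarrow> 'a) \<Rightarrow> 'a \<Rightarrow> real" where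
  "cond_dist \<mu> G n \<omega> a = real_cond_exp \<mu> G (indicator {\<omega>'. \<omega>' n = a}) \<omega>"

definition dist_max :: "('a::finite \<Rightarrow> real) \<Rightarrow> ('a \<Rightarrow> real) \<Rightarrow> real" where
  "dist_max p q = Max (range (\<lambda>a. \<bar>p a - q a\<bar>))"

end

theory Submission
  imports Defs
begin


locale mpt = prob_space M for M :: "'a measure" +
  fixes T :: "'a \<Rightarrow> 'a"
  assumes Tm[measurable]: "T \<in> measurable M M" and Tinv: "distr M M T = M"
begin

lemma Tn_meas[measurable]: "(T ^^ n) \<in> measurable M M"
  by (induction n) (auto intro: measurable_comp[OF _ Tm] simp: measurable_ident)

lemma Tn_inv: "distr M M (T ^^ n) = M"
proof (induction n)
  case 0 then show ?case by (simp add: distr_id2 cong: distr_cong) 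
next
  case (Suc n)
  have "distr M M (T ^^ Suc n) = distr (distr M M (T^^n)) M T"
    by (subst distr_distr) (auto simp: comp_def)
  then show ?case using Suc Tinv by (simp add: comp_def)
qed

lemma integral_Tn:
  fixes g :: "'a \<Rightarrow> real"
  assumes [measurable]: "g \<in> borel_measurable M"
  shows "(\<integral>x. g ((T^^n) x) \<partial>M) = (\<integral>x. g x \<partial>M)"
proof -
  have "(\<integral>x. g x \<partial>M) = (\<integral>x. g x \<partial>(distr M M (T^^n)))" using Tn_inv by simp
  also have "\<dots> = (\<integral>x. g ((T^^n) x) \<partial>M)" by (rule Bochner_Integration.integral_distr[OF Tn_meas]) auto
  finally show ?thesis by simp
qed

lemma integrable_Tn:
  fixes g :: "'a \<Rightarrow> real"
  assumes [measurable]: "g \<in> borel_measurable M"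
  shows "integrable M (\<lambda>x. g ((T^^n) x)) \<longleftrightarrow> integrable M g"
proof -
  have "integrable M g \<longleftrightarrow> integrable (distr M M (T^^n)) g" using Tn_inv by simp
  also have "\<dots> \<longleftrightarrow> integrable M (\<lambda>x. g ((T^^n) x))" by (rule Bochner_Integration.integrable_distr_eq[OF Tn_meas]) auto
  finally show ?thesis by simp
qed

lemma measure_Tn:
  assumes "A \<in> sets M"
  shows "measure M ((T^^n) -` A \<inter> space M) = measure M A"
proof -
  have "measure M A = measure (distr M M (T^^n)) A" using Tn_inv by simp
  also have "\<dots> = measure M ((T^^n) -` A \<inter> space M)" by (rule measure_distr) (auto simp: assms)
  finally show ?thesis by simp
qed

lemma AE_Tn:
  assumes "AE x in M. P x"
  shows "AE x in M. P ((T^^n) x)"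
proof -
  obtain N where N: "{x\<in>space M. \<not> P x} \<subseteq> N" "N \<in> null_sets M"
    using assms by (auto elim!: AE_E)
  have "(T^^n) -` N \<inter> space M \<in> null_sets M"
    using N measure_Tn[of N n] by (auto simp: null_sets_def emeasure_eq_measure)
  moreover have "{x\<in>space M. \<not> P ((T^^n) x)} \<subseteq> (T^^n) -` N \<inter> space M"
    using N(1) measurable_space[OF Tn_meas] by auto
  ultimately show ?thesis by (auto intro!: AE_I[where N="(T^^n) -` N \<inter> space M"])
qed

lemma funpow_Suc_in: "(T ^^ Suc k) x = (T ^^ k) (T x)"
  by (simp add: funpow_swap1)

lemma garsia:
  fixes f :: "'a \<Rightarrow> real"
  assumes f[measurable]: "f \<in> borel_measurable M" and fB: "\<And>x. \<bar>f x\<bar> \<le> B"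
  defines "S \<equiv> \<lambda>n x. \<Sum>k<n. f ((T^^k) x)"
  shows "0 \<le> (\<integral>x. indicator {x\<in>space M. \<exists>n\<in>{1..N}. S n x > 0} x * f x \<partial>M)"
proof -
  define Mx where "Mx = (\<lambda>x. Max ((\<lambda>n. S n x) ` {..N}))"
  have Sm[measurable]: "\<And>n. S n \<in> borel_measurable M" unfolding S_def by measurable
  have Mxm[measurable]: "Mx \<in> borel_measurable M" unfolding Mx_def by measurable
  have Mx_ge: "S n x \<le> Mx x" if "n \<le> N" for n x
    unfolding Mx_def using that by (intro Max_ge) auto
  have Mx_nn: "0 \<le> Mx x" for x using Mx_ge[of 0 x] by (simp add: S_def)
  obtain nx where nx: "\<And>x. nx x \<le> N \<and> Mx x = S (nx x) x"
  proof -
    have "\<forall>x. \<exists>n. n \<le> N \<and> Mx x = S n x"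
    proof
      fix x
      have "Mx x \<in> (\<lambda>n. S n x) ` {..N}" unfolding Mx_def by (intro Max_in) auto
      then show "\<exists>n. n \<le> N \<and> Mx x = S n x" by auto
    qed
    then show ?thesis using that by metis
  qed
  have SB: "\<bar>S n x\<bar> \<le> real n * B" for n x
  proof -
    have "\<bar>S n x\<bar> \<le> (\<Sum>k<n. \<bar>f ((T^^k) x)\<bar>)" unfolding S_def by (rule sum_abs)
    also have "\<dots> \<le> (\<Sum>k<n. B)" by (intro sum_mono fB)
    finally show ?thesis by simp
  qed
  have MxB: "\<bar>Mx x\<bar> \<le> real N * B" for x
    using nx[of x] SB[of "nx x" x] fB[of x]
    by (smt (verit, best) abs_ge_zero mult_right_mono of_nat_le_iff)
  have intMx: "integrable M Mx"
    by (rule integrable_const_bound[where B="real N * B"]) (auto simp: MxB)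
  have intMxT: "integrable M (\<lambda>x. Mx (T x))"
    using integrable_Tn[of Mx 1] intMx by simp
  define E where "E = {x\<in>space M. \<exists>n\<in>{1..N}. S n x > 0}"
  have Em[measurable]: "E \<in> sets M" unfolding E_def by measurable
  have key: "Mx x - Mx (T x) \<le> indicator E x * f x" if x: "x \<in> space M" for x
  proof (cases "x \<in> E")
    case True
    then obtain n where n: "n\<in>{1..N}" "S n x > 0" unfolding E_def by auto
    have "nx x \<noteq> 0"
    proof
      assume "nx x = 0"
      then have "Mx x = 0" using nx[of x] by (simp add: S_def)
      then show False using Mx_ge[of n x] n by auto
    qed
    then obtain m where m: "nx x = Suc m" by (cases "nx x") auto
    have "S (Suc m) x = f x + S m (T x)"
      unfolding S_def by (subst sum.lessThan_Suc_shift) (simp add: funpow_swap1)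
    moreover have "S m (T x) \<le> Mx (T x)" using nx[of x] m by (intro Mx_ge) auto
    ultimately show ?thesis using nx[of x] m True by simp
  next
    case False
    then have "\<forall>n\<in>{1..N}. S n x \<le> 0" using x unfolding E_def by auto
    moreover have "nx x = 0 \<or> nx x \<in> {1..N}" using nx[of x] by auto
    ultimately have "Mx x \<le> 0"
      using nx[of x] by (auto simp: S_def)
    then show ?thesis using False Mx_nn[of "T x"] by simp
  qed
  have intf: "integrable M (\<lambda>x. indicator E x * f x)"
  proof -
    have B0: "0 \<le> B" using fB[of undefined] by linarith
    show ?thesis by (rule integrable_const_bound[where B=B]) (auto simp: fB indicator_def abs_mult B0)
  qed
  have "0 = (\<integral>x. Mx x \<partial>M) - (\<integral>x. Mx (T x) \<partial>M)"
    using integral_Tn[of Mx 1] by simp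
  also have "\<dots> = (\<integral>x. Mx x - Mx (T x) \<partial>M)" using intMx intMxT by simp
  also have "\<dots> \<le> (\<integral>x. indicator E x * f x \<partial>M)"
    by (rule integral_mono) (use intMx intMxT intf key in auto)
  finally show ?thesis unfolding E_def by simp
qed

lemma maximal_ergodic_finite:
  fixes Z :: "'a \<Rightarrow> real"
  assumes Z[measurable]: "Z \<in> borel_measurable M" and Z0: "\<And>x. 0 \<le> Z x" and ZB: "\<And>x. Z x \<le> B"
    and t: "t > 0"
  shows "t * measure M {x\<in>space M. \<exists>n\<in>{1..N}. (\<Sum>k<n. Z ((T^^k) x)) > real n * t} \<le> (\<integral>x. Z x \<partial>M)"
proof -
  define f where "f = (\<lambda>x. Z x - t)"
  have fm[measurable]: "f \<in> borel_measurable M" unfolding f_def by measurable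
  have B0: "0 \<le> B" using Z0 ZB order_trans by blast
  have fB: "\<bar>f x\<bar> \<le> B + t" for x unfolding f_def using Z0[of x] ZB[of x] t by auto
  have eq: "(\<Sum>k<n. f ((T^^k) x)) > 0 \<longleftrightarrow> (\<Sum>k<n. Z ((T^^k) x)) > real n * t" for n x
    unfolding f_def by (simp add: sum_subtractf)
  define E where "E = {x\<in>space M. \<exists>n\<in>{1..N}. (\<Sum>k<n. Z ((T^^k) x)) > real n * t}"
  have Em[measurable]: "E \<in> sets M" unfolding E_def by measurable
  have "0 \<le> (\<integral>x. indicator E x * f x \<partial>M)"
    using garsia[OF fm fB, of N] unfolding E_def eq by simp
  also have "\<dots> = (\<integral>x. indicator E x * Z x \<partial>M) - t * measure M E"
  proof -
    have i1: "integrable M (\<lambda>x. indicator E x * Z x)"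
      by (rule integrable_const_bound[where B=B]) (auto simp: indicator_def Z0 ZB abs_mult B0)
    have "(\<integral>x. indicator E x * f x \<partial>M) = (\<integral>x. indicator E x * Z x - t * indicator E x \<partial>M)"
      unfolding f_def by (simp add: algebra_simps)
    also have "\<dots> = (\<integral>x. indicator E x * Z x \<partial>M) - (\<integral>x. t * indicator E x \<partial>M)"
    proof (intro Bochner_Integration.integral_diff[OF i1])
      show "integrable M (\<lambda>x. t * indicator E x)"
        by (rule integrable_const_bound[where B=t]) (use t in \<open>auto simp: indicator_def\<close>)
    qed
    finally show ?thesis by simp
  qed
  also have "(\<integral>x. indicator E x * Z x \<partial>M) \<le> (\<integral>x. Z x \<partial>M)"
  proof (rule integral_mono)
    show "integrable M (\<lambda>x. indicator E x * Z x)"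
      by (rule integrable_const_bound[where B=B]) (auto simp: indicator_def Z0 ZB abs_mult B0)
    show "integrable M Z"
      by (rule integrable_const_bound[where B=B]) (auto simp: Z0 ZB)
  qed (auto simp: indicator_def Z0)
  finally show ?thesis unfolding E_def by simp
qed

lemma maximal_ergodic:
  fixes Z :: "'a \<Rightarrow> real"
  assumes Z[measurable]: "Z \<in> borel_measurable M" and Z0: "\<And>x. 0 \<le> Z x" and ZB: "\<And>x. Z x \<le> B"
    and t: "t > 0"
  shows "t * measure M {x\<in>space M. \<exists>n\<ge>1. (\<Sum>k<n. Z ((T^^k) x)) > real n * t} \<le> (\<integral>x. Z x \<partial>M)"
proof -
  define E where "E = (\<lambda>N. {x\<in>space M. \<exists>n\<in>{1..N}. (\<Sum>k<n. Z ((T^^k) x)) > real n * t})"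
  have Em[measurable]: "E N \<in> sets M" for N unfolding E_def by measurable
  have inc: "incseq E" unfolding E_def incseq_def by force
  have U: "(\<Union>N. E N) = {x\<in>space M. \<exists>n\<ge>1. (\<Sum>k<n. Z ((T^^k) x)) > real n * t}"
    unfolding E_def by force
  have "(\<lambda>N. measure M (E N)) \<longlonglongrightarrow> measure M (\<Union>N. E N)"
    by (rule finite_Lim_measure_incseq) (auto simp: inc)
  then have "(\<lambda>N. t * measure M (E N)) \<longlonglongrightarrow> t * measure M (\<Union>N. E N)"
    by (intro tendsto_mult tendsto_const)
  moreover have "t * measure M (E N) \<le> (\<integral>x. Z x \<partial>M)" for N
    unfolding E_def by (rule maximal_ergodic_finite[OF Z Z0 ZB t])
  ultimately have "t * measure M (\<Union>N. E N) \<le> (\<integral>x. Z x \<partial>M)"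
    by (intro LIMSEQ_le_const2) auto
  then show ?thesis using U by simp
qed

end


lemma int_ind:
  fixes f :: "'a \<Rightarrow> real"
  shows "A \<in> sets M \<Longrightarrow> integrable M f \<Longrightarrow> integrable M (\<lambda>x. indicator A x * f x)"
  using integrable_real_mult_indicator[of A M f] by (simp add: mult_ac)

lemma (in sigma_finite_subalgebra) cond_exp_abs_le:
  assumes [measurable]: "integrable M h"
  shows "AE x in M. \<bar>real_cond_exp M F h x\<bar> \<le> real_cond_exp M F (\<lambda>x. \<bar>h x\<bar>) x"
proof -
  have ih: "integrable M (\<lambda>x. \<bar>h x\<bar>)" "integrable M (\<lambda>x. - h x)" using assms by auto
  have 1: "AE x in M. real_cond_exp M F h x \<le> real_cond_exp M F (\<lambda>x. \<bar>h x\<bar>) x"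
    by (rule real_cond_exp_mono) (auto simp: ih assms)
  have 2: "AE x in M. real_cond_exp M F (\<lambda>x. - h x) x \<le> real_cond_exp M F (\<lambda>x. \<bar>h x\<bar>) x"
    by (rule real_cond_exp_mono) (auto simp: ih assms)
  have 3: "AE x in M. real_cond_exp M F (\<lambda>x. (-1) * h x) x = (-1) * real_cond_exp M F h x"
    by (rule real_cond_exp_cmult[OF assms])
  show ?thesis using 1 2 3 by eventually_elim simp
qed

lemma (in sigma_finite_subalgebra) cond_exp_L1:
  assumes [measurable]: "integrable M h"
  shows "(\<integral>x. \<bar>real_cond_exp M F h x\<bar> \<partial>M) \<le> (\<integral>x. \<bar>h x\<bar> \<partial>M)"
proof -
  have ih: "integrable M (\<lambda>x. \<bar>h x\<bar>)" using assms by auto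
  have "(\<integral>x. \<bar>real_cond_exp M F h x\<bar> \<partial>M) \<le> (\<integral>x. real_cond_exp M F (\<lambda>x. \<bar>h x\<bar>) x \<partial>M)"
    by (rule integral_mono_AE) (auto intro!: real_cond_exp_int ih assms cond_exp_abs_le)
  also have "\<dots> = (\<integral>x. \<bar>h x\<bar> \<partial>M)" by (rule real_cond_exp_int(2)[OF ih])
  finally show ?thesis .
qed

lemma doob_maximal:
  fixes G :: "nat \<Rightarrow> 'a measure" and h :: "'a \<Rightarrow> real"
  assumes P: "prob_space M"
    and G: "\<And>k. sigma_finite_subalgebra M (G k)"
    and mono: "\<And>j k. j \<le> k \<Longrightarrow> sets (G j) \<subseteq> sets (G k)"
    and h[measurable]: "integrable M h" and l: "l > 0"
  shows "l * measure M {x\<in>space M. \<exists>k\<le>m. l \<le> \<bar>real_cond_exp M (G k) h x\<bar>} \<le> (\<integral>x. \<bar>h x\<bar> \<partial>M)"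
proof -
  interpret prob_space M by (rule P)
  define Y where "Y = (\<lambda>k. real_cond_exp M (G k) h)"
  have spG: "space (G k) = space M" for k using G[of k] unfolding sigma_finite_subalgebra_def subalgebra_def by auto
  have YG: "Y j \<in> borel_measurable (G k)" if "j \<le> k" for j k
  proof -
    have "subalgebra (G k) (G j)" unfolding subalgebra_def using spG mono[OF that] by auto
    moreover have "Y j \<in> borel_measurable (G j)"
      unfolding Y_def by (rule borel_measurable_cond_exp)
    ultimately show ?thesis by (rule measurable_from_subalg)
  qed
  have YM[measurable]: "Y j \<in> borel_measurable M" for j
    unfolding Y_def by (rule borel_measurable_cond_exp2)
  define A where "A = (\<lambda>k. {x\<in>space M. l \<le> \<bar>Y k x\<bar> \<and> (\<forall>j<k. \<bar>Y j x\<bar> < l)})"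
  have AG: "A k \<in> sets (G k)" for k
  proof -
    have [measurable]: "Y j \<in> borel_measurable (G k)" if "j \<le> k" for j using YG that by auto
    have "A k = {x\<in>space (G k). l \<le> \<bar>Y k x\<bar> \<and> (\<forall>j<k. \<bar>Y j x\<bar> < l)}"
      unfolding A_def spG ..
    also have "\<dots> \<in> sets (G k)" by measurable
    finally show ?thesis .
  qed
  have AM[measurable]: "A k \<in> sets M" for k
    using AG[of k] G[of k] unfolding sigma_finite_subalgebra_def subalgebra_def by auto
  have sub: "{x\<in>space M. \<exists>k\<le>m. l \<le> \<bar>Y k x\<bar>} \<subseteq> (\<Union>k\<in>{..m}. A k)"
  proof
    fix x assume "x \<in> {x\<in>space M. \<exists>k\<le>m. l \<le> \<bar>Y k x\<bar>}"
    then obtain k where k: "x \<in> space M" "k \<le> m" "l \<le> \<bar>Y k x\<bar>" by auto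
    define k0 where "k0 = (LEAST k. l \<le> \<bar>Y k x\<bar>)"
    have "l \<le> \<bar>Y k0 x\<bar>" unfolding k0_def by (rule LeastI[of _ k]) (use k in auto)
    moreover have "k0 \<le> k" unfolding k0_def by (rule Least_le) (use k in auto)
    moreover have "\<forall>j<k0. \<bar>Y j x\<bar> < l" unfolding k0_def using not_less_Least by force
    ultimately show "x \<in> (\<Union>k\<in>{..m}. A k)" unfolding A_def using k by auto
  qed
  have disj: "disjoint_family_on A {..m}"
    unfolding disjoint_family_on_def A_def
    by (auto, metis linorder_neqE_nat not_less)
  have stepk: "l * measure M (A k) \<le> (\<integral>x. indicator (A k) x * \<bar>h x\<bar> \<partial>M)" for k
  proof -
    interpret Gk: sigma_finite_subalgebra M "G k" by (rule G)
    have iY: "integrable M (Y k)" unfolding Y_def by (rule Gk.real_cond_exp_int(1)[OF h])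
    have ih: "integrable M (\<lambda>x. \<bar>h x\<bar>)" using h by auto
    have iEh: "integrable M (real_cond_exp M (G k) (\<lambda>x. \<bar>h x\<bar>))" by (rule Gk.real_cond_exp_int(1)[OF ih])
    have "l * measure M (A k) = (\<integral>x. l * indicator (A k) x \<partial>M)" by simp
    also have "\<dots> \<le> (\<integral>x. indicator (A k) x * \<bar>Y k x\<bar> \<partial>M)"
    proof (rule integral_mono)
      show "integrable M (\<lambda>x. l * indicator (A k) x)"
        by (intro integrable_mult_right integrable_real_indicator) (auto simp: less_top[symmetric])
      show "integrable M (\<lambda>x. indicator (A k) x * \<bar>Y k x\<bar>)"
        by (intro int_ind) (auto simp: iY)
    qed (auto simp: A_def indicator_def)
    also have "\<dots> \<le> (\<integral>x. indicator (A k) x * real_cond_exp M (G k) (\<lambda>x. \<bar>h x\<bar>) x \<partial>M)"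
    proof (rule integral_mono_AE)
      show "integrable M (\<lambda>x. indicator (A k) x * \<bar>Y k x\<bar>)"
        by (auto intro!: int_ind iY)
      show "integrable M (\<lambda>x. indicator (A k) x * real_cond_exp M (G k) (\<lambda>x. \<bar>h x\<bar>) x)"
        by (auto intro!: int_ind iEh)
      show "AE x in M. indicator (A k) x * \<bar>Y k x\<bar> \<le> indicator (A k) x * real_cond_exp M (G k) (\<lambda>x. \<bar>h x\<bar>) x"
        using Gk.cond_exp_abs_le[OF h] unfolding Y_def by eventually_elim (auto simp: indicator_def)
    qed
    also have "\<dots> = (\<integral>x. indicator (A k) x * \<bar>h x\<bar> \<partial>M)"
    proof (rule Gk.real_cond_exp_intg(2))
      show "integrable M (\<lambda>x. indicator (A k) x * \<bar>h x\<bar>)"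
        by (auto intro!: int_ind ih)
      show "indicator (A k) \<in> borel_measurable (G k)" using AG by measurable
    qed auto
    finally show ?thesis .
  qed
  have "l * measure M {x\<in>space M. \<exists>k\<le>m. l \<le> \<bar>Y k x\<bar>} \<le> l * measure M (\<Union>k\<in>{..m}. A k)"
    using l sub by (intro mult_left_mono finite_measure_mono) auto
  also have "\<dots> = (\<Sum>k\<le>m. l * measure M (A k))"
    using disj by (subst measure_finite_Union) (auto simp: sum_distrib_left)
  also have "\<dots> \<le> (\<Sum>k\<le>m. \<integral>x. indicator (A k) x * \<bar>h x\<bar> \<partial>M)"
    by (intro sum_mono stepk)
  also have "\<dots> = (\<integral>x. (\<Sum>k\<le>m. indicator (A k) x) * \<bar>h x\<bar> \<partial>M)"
    unfolding sum_distrib_right by (rule Bochner_Integration.integral_sum[symmetric]) (auto intro!: int_ind integrable_abs h)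
  also have "\<dots> = (\<integral>x. indicator (\<Union>k\<in>{..m}. A k) x * \<bar>h x\<bar> \<partial>M)"
    by (simp add: indicator_UN_disjoint[OF _ disj])
  also have "\<dots> \<le> (\<integral>x. \<bar>h x\<bar> \<partial>M)"
  proof (rule integral_mono)
    show "integrable M (\<lambda>x. indicator (\<Union>k\<in>{..m}. A k) x * \<bar>h x\<bar>)"
      by (rule int_ind) (auto intro!: integrable_abs h)
  qed (auto intro!: integrable_abs h simp: indicator_def)
  finally show ?thesis unfolding Y_def .
qed



locale filt = prob_space M for M :: "'a measure" +
  fixes G :: "nat \<Rightarrow> 'a measure" and Ginf :: "'a measure"
  assumes G: "\<And>k. sigma_finite_subalgebra M (G k)"
    and mono: "\<And>j k. j \<le> k \<Longrightarrow> sets (G j) \<subseteq> sets (G k)"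
    and Ginf: "sigma_finite_subalgebra M Ginf"
    and Ginf_gen: "sets Ginf = sigma_sets (space M) (\<Union>k. sets (G k))"
begin

lemma spG: "space (G k) = space M"
  using G[of k] unfolding sigma_finite_subalgebra_def subalgebra_def by auto

lemma setsG: "sets (G k) \<subseteq> sets M"
  using G[of k] unfolding sigma_finite_subalgebra_def subalgebra_def by auto

lemma setsGinf: "sets Ginf \<subseteq> sets M"
  using Ginf unfolding sigma_finite_subalgebra_def subalgebra_def by auto

lemma approx_sets:
  assumes "A \<in> sets Ginf" "e > 0"
  shows "\<exists>j. \<exists>B\<in>sets (G j). measure M ((A - B) \<union> (B - A)) < e"
proof -
  define G0 where "G0 = (\<Union>k. sets (G k))"
  have G0M: "G0 \<subseteq> sets M" unfolding G0_def using setsG by auto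
  have G0P: "G0 \<subseteq> Pow (space M)" using G0M sets.sets_into_space by auto
  have IS: "Int_stable G0"
  proof (rule Int_stableI)
    fix a b assume "a \<in> G0" "b \<in> G0"
    then obtain j k where "a \<in> sets (G j)" "b \<in> sets (G k)" unfolding G0_def by auto
    then have "a \<in> sets (G (max j k))" "b \<in> sets (G (max j k))" using mono[of j "max j k"] mono[of k "max j k"] by auto
    then show "a \<inter> b \<in> G0" unfolding G0_def by auto
  qed
  have sub: "sigma_sets (space M) G0 \<subseteq> sets M" using G0M by (rule sets.sigma_sets_subset)
  have Asig: "A \<in> sigma_sets (space M) G0" using assms Ginf_gen unfolding G0_def by auto
  from IS G0P Asig have "\<forall>e>0. \<exists>j. \<exists>B\<in>sets (G j). measure M ((A - B) \<union> (B - A)) < e"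
  proof (induction rule: sigma_sets_induct_disjoint)
    case (basic A)
    then obtain j where "A \<in> sets (G j)" unfolding G0_def by auto
    then show ?case by (intro allI impI exI[of _ j] bexI[of _ A]) auto
  next
    case empty
    show ?case by (intro allI impI exI[of _ 0] bexI[of _ "{}"]) auto
  next
    case (compl A)
    show ?case
    proof (intro allI impI)
      fix e :: real assume e: "e > 0"
      then obtain j B where B: "B \<in> sets (G j)" "measure M ((A - B) \<union> (B - A)) < e" using compl by auto
      have "A \<in> sets M" using compl(1) sub by auto
      then have AS: "A \<subseteq> space M" by (rule sets.sets_into_space)
      have "B \<in> sets M" using B(1) setsG by auto
      then have BS: "B \<subseteq> space M" by (rule sets.sets_into_space)
      have "space M - B \<in> sets (G j)" using B spG[of j] by (metis sets.compl_sets)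
      moreover have "((space M - A) - (space M - B)) \<union> ((space M - B) - (space M - A)) = (A - B) \<union> (B - A)"
        using AS BS by auto
      ultimately show "\<exists>j. \<exists>B\<in>sets (G j). measure M (((space M - A) - B) \<union> (B - (space M - A))) < e"
        using B(2) by (intro exI[of _ j] bexI[of _ "space M - B"]) simp_all
    qed
  next
    case (union A)
    have AM: "A i \<in> sets M" for i using union sub by auto
    show ?case
    proof (intro allI impI)
      fix e :: real assume e: "e > 0"
      define U where "U = (\<Union>i. A i)"
      define V where "V = (\<lambda>n. \<Union>i\<in>{..<n}. A i)"
      have UM: "U \<in> sets M" unfolding U_def using AM by auto
      have VM: "V n \<in> sets M" for n unfolding V_def using AM by auto
      have incV: "incseq V" unfolding V_def incseq_def by (intro allI impI UN_mono) auto
      have UV: "(\<Union>n. V n) = U" unfolding U_def V_def by auto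
      have "(\<lambda>n. measure M (V n)) \<longlonglongrightarrow> measure M U"
        using finite_Lim_measure_incseq[of V] VM incV UV by auto
      from LIMSEQ_D[OF this, of "e/2"] e obtain n where "norm (measure M (V n) - measure M U) < e/2"
        by auto
      then have n: "measure M U - measure M (V n) < e/2" unfolding real_norm_def by linarith
      define e' where "e' = e / (2 * (real n + 1))"
      have e': "e' > 0" unfolding e'_def using e by auto
      have "\<forall>i. \<exists>j. \<exists>B\<in>sets (G j). measure M ((A i - B) \<union> (B - A i)) < e'"
        using union e' by auto
      from choice[OF this] obtain jf where "\<forall>i. \<exists>B. B \<in> sets (G (jf i)) \<and> measure M ((A i - B) \<union> (B - A i)) < e'"
        by blast
      from choice[OF this] obtain Bf where jB': "\<forall>i. Bf i \<in> sets (G (jf i)) \<and> measure M ((A i - Bf i) \<union> (Bf i - A i)) < e'"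
        by blast
      then have jB: "\<And>i. Bf i \<in> sets (G (jf i))" "\<And>i. measure M ((A i - Bf i) \<union> (Bf i - A i)) < e'"
        by auto
      define J where "J = Max (jf ` {..n})"
      have jJ: "jf i \<le> J" if "i < n" for i unfolding J_def using that by (intro Max_ge) auto
      define B where "B = (\<Union>i\<in>{..<n}. Bf i)"
      have BJ: "B \<in> sets (G J)"
      proof -
        have "Bf i \<in> sets (G J)" if "i < n" for i using jB(1)[of i] mono[OF jJ[OF that]] by auto
        then show ?thesis unfolding B_def by auto
      qed
      have BfM: "Bf i \<in> sets M" for i using jB(1)[of i] setsG by auto
      have dM: "(A i - Bf i) \<union> (Bf i - A i) \<in> sets M" for i using AM BfM by auto
      have incl: "(U - B) \<union> (B - U) \<subseteq> (U - V n) \<union> (\<Union>i\<in>{..<n}. (A i - Bf i) \<union> (Bf i - A i))"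
        unfolding U_def V_def B_def by auto
      have "measure M ((U - B) \<union> (B - U)) \<le> measure M ((U - V n) \<union> (\<Union>i\<in>{..<n}. (A i - Bf i) \<union> (Bf i - A i)))"
        using incl UM VM dM by (intro finite_measure_mono) auto
      also have "\<dots> \<le> measure M (U - V n) + measure M (\<Union>i\<in>{..<n}. (A i - Bf i) \<union> (Bf i - A i))"
        using UM VM dM by (intro measure_Un_le) auto
      also have "measure M (\<Union>i\<in>{..<n}. (A i - Bf i) \<union> (Bf i - A i)) \<le> (\<Sum>i<n. measure M ((A i - Bf i) \<union> (Bf i - A i)))"
        using dM by (intro measure_UNION_le) auto
      also have "\<dots> \<le> (\<Sum>i<n. e')" using jB(2) by (intro sum_mono) (auto intro: less_imp_le)
      also have "measure M (U - V n) = measure M U - measure M (V n)"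
      proof -
        have "V n \<subseteq> U" unfolding U_def V_def by auto
        then show ?thesis using UM VM by (intro finite_measure_Diff) auto
      qed
      finally have "measure M ((U - B) \<union> (B - U)) \<le> measure M U - measure M (V n) + real n * e'" by simp
      also have "real n * e' < e / 2"
        unfolding e'_def using e by (simp add: field_simps)
      finally have "measure M ((U - B) \<union> (B - U)) < e" using n by simp
      then show "\<exists>j. \<exists>B\<in>sets (G j). measure M ((U - B) \<union> (B - U)) < e" using BJ by auto
    qed
  qed
  then show ?thesis using assms(2) by auto
qed

definition err :: "nat \<Rightarrow> ('a \<Rightarrow> real) \<Rightarrow> real" where
  "err k g = (\<integral>x. \<bar>g x - real_cond_exp M (G k) g x\<bar> \<partial>M)"

lemma err_nonneg: "0 \<le> err k g"
  unfolding err_def by simp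

lemma err_bound:
  assumes g[measurable]: "integrable M g"
  shows "err k g \<le> 2 * (\<integral>x. \<bar>g x\<bar> \<partial>M)"
proof -
  interpret Gk: sigma_finite_subalgebra M "G k" by (rule G)
  have iE: "integrable M (real_cond_exp M (G k) g)" by (rule Gk.real_cond_exp_int(1)[OF g])
  have "err k g \<le> (\<integral>x. \<bar>g x\<bar> + \<bar>real_cond_exp M (G k) g x\<bar> \<partial>M)"
    unfolding err_def by (rule integral_mono) (auto intro!: iE g integrable_abs Bochner_Integration.integrable_add Bochner_Integration.integrable_diff)
  also have "\<dots> = (\<integral>x. \<bar>g x\<bar> \<partial>M) + (\<integral>x. \<bar>real_cond_exp M (G k) g x\<bar> \<partial>M)"
    by (rule Bochner_Integration.integral_add) (auto intro!: iE g integrable_abs)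
  also have "\<dots> \<le> (\<integral>x. \<bar>g x\<bar> \<partial>M) + (\<integral>x. \<bar>g x\<bar> \<partial>M)"
    using Gk.cond_exp_L1[OF g] by simp
  finally show ?thesis by simp
qed

lemma err_add:
  assumes f[measurable]: "integrable M f" and g[measurable]: "integrable M g"
  shows "err k (\<lambda>x. f x + g x) \<le> err k f + err k g"
proof -
  interpret Gk: sigma_finite_subalgebra M "G k" by (rule G)
  have iEf: "integrable M (real_cond_exp M (G k) f)" by (rule Gk.real_cond_exp_int(1)[OF f])
  have iEg: "integrable M (real_cond_exp M (G k) g)" by (rule Gk.real_cond_exp_int(1)[OF g])
  have i1: "integrable M (\<lambda>x. \<bar>f x - real_cond_exp M (G k) f x\<bar>)" using iEf f by auto
  have i2: "integrable M (\<lambda>x. \<bar>g x - real_cond_exp M (G k) g x\<bar>)" using iEg g by auto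
  have "err k (\<lambda>x. f x + g x) = (\<integral>x. \<bar>(f x - real_cond_exp M (G k) f x) + (g x - real_cond_exp M (G k) g x)\<bar> \<partial>M)"
    unfolding err_def
    by (rule integral_cong_AE) (use Gk.real_cond_exp_add[OF f g] in \<open>auto elim!: eventually_mono\<close>)
  also have "\<dots> \<le> (\<integral>x. \<bar>f x - real_cond_exp M (G k) f x\<bar> + \<bar>g x - real_cond_exp M (G k) g x\<bar> \<partial>M)"
    by (rule integral_mono) (auto intro!: i1 i2 Bochner_Integration.integrable_add iEf iEg f g integrable_abs Bochner_Integration.integrable_diff abs_triangle_ineq)
  also have "\<dots> = err k f + err k g"
    unfolding err_def by (rule Bochner_Integration.integral_add[OF i1 i2])
  finally show ?thesis .
qed

lemma err_cmult:
  assumes f[measurable]: "integrable M f"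
  shows "err k (\<lambda>x. c * f x) = \<bar>c\<bar> * err k f"
proof -
  interpret Gk: sigma_finite_subalgebra M "G k" by (rule G)
  have "err k (\<lambda>x. c * f x) = (\<integral>x. \<bar>c\<bar> * \<bar>f x - real_cond_exp M (G k) f x\<bar> \<partial>M)"
    unfolding err_def
    by (rule integral_cong_AE) (use Gk.real_cond_exp_cmult[OF f, of c] in \<open>auto elim!: eventually_mono simp: abs_mult[symmetric] right_diff_distrib\<close>)
  also have "\<dots> = \<bar>c\<bar> * err k f" unfolding err_def by simp
  finally show ?thesis .
qed

lemma err_ind:
  assumes A: "A \<in> sets Ginf"
  shows "(\<lambda>k. err k (indicator A)) \<longlonglongrightarrow> 0"
proof (rule LIMSEQ_I)
  fix r :: real assume r: "r > 0"
  have AM[measurable]: "A \<in> sets M" using A setsGinf by auto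
  obtain j B where B: "B \<in> sets (G j)" "measure M ((A - B) \<union> (B - A)) < r/3"
    using approx_sets[OF A, of "r/3"] r by auto
  have BM[measurable]: "B \<in> sets M" using B setsG by auto
  have "norm (err k (indicator A) - 0) < r" if k: "k \<ge> j" for k
  proof -
    interpret Gk: sigma_finite_subalgebra M "G k" by (rule G)
    have BG: "B \<in> sets (G k)" using B(1) mono[OF k] by auto
    have iA: "integrable M (indicator A :: 'a \<Rightarrow> real)" by (auto simp: less_top[symmetric])
    have iB: "integrable M (indicator B :: 'a \<Rightarrow> real)" by (auto simp: less_top[symmetric])
    define d where "d = (\<lambda>x. indicator A x - indicator B x :: real)"
    have id[measurable]: "integrable M d" unfolding d_def using iA iB by auto
    have e1: "AE x in M. real_cond_exp M (G k) (indicator B) x = indicator B x"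
      by (rule Gk.real_cond_exp_F_meas[OF iB]) (use BG in measurable)
    have e2: "AE x in M. real_cond_exp M (G k) d x = real_cond_exp M (G k) (indicator A) x - real_cond_exp M (G k) (indicator B) x"
      unfolding d_def by (rule Gk.real_cond_exp_diff[OF iA iB])
    have ae: "AE x in M. \<bar>indicator A x - real_cond_exp M (G k) (indicator A) x\<bar> = \<bar>d x - real_cond_exp M (G k) d x\<bar>"
      using e1 e2 by eventually_elim (simp add: d_def)
    have "err k (indicator A) = err k d"
      unfolding err_def using ae by (intro integral_cong_AE) auto
    also have "\<dots> \<le> 2 * (\<integral>x. \<bar>d x\<bar> \<partial>M)" by (rule err_bound[OF id])
    also have "(\<integral>x. \<bar>d x\<bar> \<partial>M) = measure M ((A - B) \<union> (B - A))"
    proof -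
      have "(\<lambda>x. \<bar>d x\<bar>) = indicator ((A - B) \<union> (B - A))" unfolding d_def by (auto simp: indicator_def)
      then show ?thesis by simp
    qed
    finally show ?thesis using B(2) err_nonneg[of k "indicator A"] by simp
  qed
  then show "\<exists>no. \<forall>n\<ge>no. norm (err n (indicator A) - 0) < r" by auto
qed

lemma levy_L1:
  assumes g: "integrable M g" "g \<in> borel_measurable Ginf"
  shows "(\<lambda>k. err k g) \<longlonglongrightarrow> 0"
proof -
  have sub: "subalgebra M Ginf" using Ginf unfolding sigma_finite_subalgebra_def by auto
  let ?N = "restr_to_subalg M Ginf"
  have "integrable ?N g" by (rule integrable_in_subalg[OF sub g(2) g(1)])
  then show ?thesis
  proof (induction rule: integrable_induct)
    case (base A c)
    then have AG: "A \<in> sets Ginf" using sets_restr_to_subalg[OF sub] by auto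
    have AM: "A \<in> sets M" using AG setsGinf by auto
    have iA: "integrable M (indicator A :: 'a \<Rightarrow> real)" using AM by (auto simp: less_top[symmetric])
    have eq: "(\<lambda>x. indicator A x *\<^sub>R c) = (\<lambda>x. c * indicator A x)" by (auto simp: fun_eq_iff)
    show ?case unfolding eq err_cmult[OF iA]
      by (rule tendsto_mult_right_zero[OF err_ind[OF AG]])
  next
    case (add f g)
    have f: "integrable M f" using integrable_from_subalg[OF sub] add by blast
    have g: "integrable M g" using integrable_from_subalg[OF sub] add by blast
    have IHf: "(\<lambda>k. err k f) \<longlonglongrightarrow> 0" "(\<lambda>k. err k g) \<longlonglongrightarrow> 0" using add by blast+
    show ?case
    proof (rule tendsto_sandwich[where f="\<lambda>k. 0" and h="\<lambda>k. err k f + err k g"])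
      show "\<forall>\<^sub>F k in sequentially. 0 \<le> err k (\<lambda>x. f x + g x)" by (simp add: err_nonneg)
      show "\<forall>\<^sub>F k in sequentially. err k (\<lambda>x. f x + g x) \<le> err k f + err k g"
        using err_add[OF f g] by simp
      show "(\<lambda>k. err k f + err k g) \<longlonglongrightarrow> 0" using tendsto_add[OF IHf] by simp
    qed simp
  next
    case (lim f s)
    have f[measurable]: "integrable M f" using integrable_from_subalg[OF sub] lim by blast
    have s[measurable]: "integrable M (s i)" for i using integrable_from_subalg[OF sub] lim by blast
    have IH: "(\<lambda>k. err k (s i)) \<longlonglongrightarrow> 0" for i using lim by blast
    have lim3: "\<And>x. x \<in> space ?N \<Longrightarrow> (\<lambda>i. s i x) \<longlonglongrightarrow> f x" using lim by blast
    have lim4: "\<And>i x. x \<in> space ?N \<Longrightarrow> norm (s i x) \<le> 2 * norm (f x)" using lim by blast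
    have fm[measurable]: "f \<in> borel_measurable M" using f by auto
    have sm[measurable]: "s i \<in> borel_measurable M" for i using s by auto
    have spN: "space ?N = space M" by (rule space_restr_to_subalg)
    have conv: "(\<lambda>i. \<integral>x. \<bar>f x - s i x\<bar> \<partial>M) \<longlonglongrightarrow> (\<integral>x. 0 \<partial>M)"
    proof (rule integral_dominated_convergence[where w="\<lambda>x. 3 * \<bar>f x\<bar>"])
      show "AE x in M. (\<lambda>i. \<bar>f x - s i x\<bar>) \<longlonglongrightarrow> 0"
      proof (rule AE_I2)
        fix x assume "x \<in> space M"
        then have "(\<lambda>i. s i x) \<longlonglongrightarrow> f x" using lim3 spN by auto
        then have "(\<lambda>i. f x - s i x) \<longlonglongrightarrow> f x - f x" by (intro tendsto_diff tendsto_const)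
        then show "(\<lambda>i. \<bar>f x - s i x\<bar>) \<longlonglongrightarrow> 0" using tendsto_rabs_zero by fastforce
      qed
      show "AE x in M. norm \<bar>f x - s i x\<bar> \<le> 3 * \<bar>f x\<bar>" for i
      proof (rule AE_I2)
        fix x assume "x \<in> space M"
        then have "\<bar>s i x\<bar> \<le> 2 * \<bar>f x\<bar>" using lim4[of x i] spN by auto
        then show "norm \<bar>f x - s i x\<bar> \<le> 3 * \<bar>f x\<bar>" by simp
      qed
    qed (auto intro!: f)
    show ?case
    proof (rule LIMSEQ_I)
      fix r :: real assume r: "r > 0"
      from LIMSEQ_D[OF conv, of "r/4"] r obtain i where i: "(\<integral>x. \<bar>f x - s i x\<bar> \<partial>M) < r/4"
        by auto
      have "r/2 > 0" using r by simp
      from LIMSEQ_D[OF IH[of i] this] obtain k0 where k0': "\<forall>k\<ge>k0. norm (err k (s i) - 0) < r/2"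
        by blast
      have k0: "err k (s i) < r/2" if "k \<ge> k0" for k
      proof -
        have "err k (s i) \<le> norm (err k (s i) - 0)" by simp
        then show ?thesis using k0' that by fastforce
      qed
      have "norm (err k f - 0) < r" if "k \<ge> k0" for k
      proof -
        have eq: "f = (\<lambda>x. s i x + (f x - s i x))" by auto
        have "err k f \<le> err k (s i) + err k (\<lambda>x. f x - s i x)"
          by (subst eq, rule err_add) (auto intro!: s f)
        also have "err k (\<lambda>x. f x - s i x) \<le> 2 * (\<integral>x. \<bar>f x - s i x\<bar> \<partial>M)"
          by (rule err_bound) (auto intro!: s f)
        finally show ?thesis using i k0[OF that] err_nonneg[of k f] by simp
      qed
      then show "\<exists>no. \<forall>k\<ge>no. norm (err k f - 0) < r" by auto
    qed
  qed
qed

end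


context filt begin

lemma GsubGinf: "subalgebra Ginf (G k)"
proof -
  have "sets (G k) \<subseteq> sigma_sets (space M) (\<Union>k. sets (G k))" by (auto intro: sigma_sets.Basic)
  then show ?thesis unfolding subalgebra_def using Ginf_gen spG Ginf
    by (auto simp: sigma_finite_subalgebra_def subalgebra_def)
qed

lemma GinfM: "subalgebra M Ginf" using Ginf by (auto simp: sigma_finite_subalgebra_def)

lemma tower:
  assumes f[measurable]: "integrable M f"
  shows "AE x in M. real_cond_exp M (G k) (real_cond_exp M Ginf f) x = real_cond_exp M (G k) f x"
proof -
  interpret Gk: sigma_finite_subalgebra M "G k" by (rule G)
  show ?thesis by (rule Gk.real_cond_exp_nested_subalg[OF GinfM GsubGinf f])
qed

lemma tail_bound:
  assumes f[measurable]: "integrable M f" and l: "l > 0"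
  shows "measure M {x\<in>space M. \<exists>n\<ge>k. l < \<bar>real_cond_exp M (G n) f x - real_cond_exp M (G k) f x\<bar>}
    \<le> (\<integral>x. \<bar>real_cond_exp M Ginf f x - real_cond_exp M (G k) f x\<bar> \<partial>M) / l"
proof -
  define r where "r = (\<lambda>n. real_cond_exp M (G n) f)"
  define rinf where "rinf = real_cond_exp M Ginf f"
  interpret GI: sigma_finite_subalgebra M Ginf by (rule Ginf)
  have rm[measurable]: "r n \<in> borel_measurable M" for n unfolding r_def by (rule borel_measurable_cond_exp2)
  have ir: "integrable M (r n)" for n unfolding r_def using sigma_finite_subalgebra.real_cond_exp_int(1)[OF G f] .
  have irinf: "integrable M rinf" unfolding rinf_def by (rule GI.real_cond_exp_int(1)[OF f])
  define h where "h = (\<lambda>x. rinf x - r k x)"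
  have ih[measurable]: "integrable M h" unfolding h_def using irinf ir by auto
  define G' where "G' = (\<lambda>j. G (k + j))"
  have G': "\<And>j. sigma_finite_subalgebra M (G' j)" unfolding G'_def by (rule G)
  have mono': "\<And>i j. i \<le> j \<Longrightarrow> sets (G' i) \<subseteq> sets (G' j)" unfolding G'_def by (rule mono) simp
  have Eh: "AE x in M. real_cond_exp M (G' j) h x = r (k + j) x - r k x" for j
  proof -
    interpret Gj: sigma_finite_subalgebra M "G' j" by (rule G')
    have 1: "AE x in M. real_cond_exp M (G' j) h x = real_cond_exp M (G' j) rinf x - real_cond_exp M (G' j) (r k) x"
      unfolding h_def by (rule Gj.real_cond_exp_diff[OF irinf ir])
    have 2: "AE x in M. real_cond_exp M (G' j) rinf x = r (k + j) x"
      unfolding rinf_def r_def G'_def by (rule tower[OF f])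
    have rkG: "r k \<in> borel_measurable (G' j)"
    proof -
      have "subalgebra (G' j) (G k)" unfolding subalgebra_def G'_def using spG mono[of k "k+j"] by auto
      moreover have "r k \<in> borel_measurable (G k)" unfolding r_def by (rule borel_measurable_cond_exp)
      ultimately show ?thesis by (rule measurable_from_subalg)
    qed
    have 3: "AE x in M. real_cond_exp M (G' j) (r k) x = r k x"
      by (rule Gj.real_cond_exp_F_meas[OF ir rkG])
    show ?thesis using 1 2 3 by eventually_elim simp
  qed
  have AEall: "AE x in M. \<forall>j. real_cond_exp M (G' j) h x = r (k + j) x - r k x"
    using Eh by (simp add: AE_all_countable)
  define E where "E = (\<lambda>m. {x\<in>space M. \<exists>n\<in>{k..k+m}. l < \<bar>r n x - r k x\<bar>})"
  define D where "D = (\<lambda>m. {x\<in>space M. \<exists>j\<le>m. l \<le> \<bar>real_cond_exp M (G' j) h x\<bar>})"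
  have Em[measurable]: "E m \<in> sets M" for m unfolding E_def by measurable
  have Dm[measurable]: "D m \<in> sets M" for m
  proof -
    have [measurable]: "real_cond_exp M (G' j) h \<in> borel_measurable M" for j by (rule borel_measurable_cond_exp2)
    show ?thesis unfolding D_def by measurable
  qed
  have ED: "measure M (E m) \<le> measure M (D m)" for m
  proof -
    have "AE x in M. x \<in> E m \<longrightarrow> x \<in> D m"
      using AEall
    proof eventually_elim
      case (elim x)
      show ?case
      proof
        assume "x \<in> E m"
        then obtain n where n: "x \<in> space M" "n \<in> {k..k+m}" "l < \<bar>r n x - r k x\<bar>" unfolding E_def by auto
        then have "n = k + (n - k)" "n - k \<le> m" by auto
        then show "x \<in> D m" using n elim[rule_format, of "n - k"] unfolding D_def by (intro CollectI conjI exI[of _ "n-k"]) auto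
      qed
    qed
    then have "emeasure M (E m) \<le> emeasure M (D m)" by (rule emeasure_mono_AE) simp
    then show ?thesis by (simp add: emeasure_eq_measure)
  qed
  have DB: "measure M (D m) \<le> (\<integral>x. \<bar>h x\<bar> \<partial>M) / l" for m
  proof -
    have "l * measure M (D m) \<le> (\<integral>x. \<bar>h x\<bar> \<partial>M)"
      unfolding D_def by (rule doob_maximal[OF prob_space_axioms G' mono' ih l])
    then show ?thesis using l by (simp add: field_simps)
  qed
  have inc: "incseq E" unfolding incseq_def E_def by force
  have U: "(\<Union>m. E m) = {x\<in>space M. \<exists>n\<ge>k. l < \<bar>r n x - r k x\<bar>}"
  proof
    show "(\<Union>m. E m) \<subseteq> {x\<in>space M. \<exists>n\<ge>k. l < \<bar>r n x - r k x\<bar>}" unfolding E_def by auto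
    show "{x\<in>space M. \<exists>n\<ge>k. l < \<bar>r n x - r k x\<bar>} \<subseteq> (\<Union>m. E m)"
    proof
      fix x assume "x \<in> {x\<in>space M. \<exists>n\<ge>k. l < \<bar>r n x - r k x\<bar>}"
      then obtain n where "x \<in> space M" "n \<ge> k" "l < \<bar>r n x - r k x\<bar>" by auto
      then have "x \<in> E (n - k)" unfolding E_def by auto
      then show "x \<in> (\<Union>m. E m)" by auto
    qed
  qed
  have "(\<lambda>m. measure M (E m)) \<longlonglongrightarrow> measure M (\<Union>m. E m)"
    by (rule finite_Lim_measure_incseq) (auto simp: inc)
  moreover have "measure M (E m) \<le> (\<integral>x. \<bar>h x\<bar> \<partial>M) / l" for m using ED[of m] DB[of m] by linarith
  ultimately have "measure M (\<Union>m. E m) \<le> (\<integral>x. \<bar>h x\<bar> \<partial>M) / l"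
    by (intro LIMSEQ_le_const2) auto
  then show ?thesis using U unfolding h_def rinf_def r_def by simp
qed

end


context mpt begin

lemma cond_exp_transfer:
  fixes f :: "'a \<Rightarrow> real"
  assumes Gs: "sigma_finite_subalgebra M Gs" and G': "sigma_finite_subalgebra M G'"
    and sG': "sets G' = {(T^^n) -` A \<inter> space M | A. A \<in> sets Gs}"
    and f[measurable]: "integrable M f"
  shows "AE x in M. real_cond_exp M G' (\<lambda>x. f ((T^^n) x)) x = real_cond_exp M Gs f ((T^^n) x)"
proof -
  interpret Gs: sigma_finite_subalgebra M Gs by (rule Gs)
  interpret G': sigma_finite_subalgebra M G' by (rule G')
  define S where "S = T^^n"
  have Sm[measurable]: "S \<in> measurable M M" unfolding S_def by (rule Tn_meas)
  define E where "E = real_cond_exp M Gs f"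
  have EGs: "E \<in> borel_measurable Gs" unfolding E_def by (rule borel_measurable_cond_exp)
  have EM[measurable]: "E \<in> borel_measurable M" unfolding E_def by (rule borel_measurable_cond_exp2)
  have iE: "integrable M E" unfolding E_def by (rule Gs.real_cond_exp_int(1)[OF f])
  have spGs: "space Gs = space M" using Gs.subalg by (simp add: subalgebra_def)
  have spG': "space G' = space M" using G'.subalg by (simp add: subalgebra_def)
  have fm[measurable]: "f \<in> borel_measurable M" using f by auto
  show ?thesis unfolding S_def[symmetric] E_def[symmetric]
  proof (rule G'.real_cond_exp_charact)
    show "integrable M (\<lambda>x. f (S x))" unfolding S_def using integrable_Tn[of f n] f by auto
    show "integrable M (\<lambda>x. E (S x))" unfolding S_def using integrable_Tn[of E n] iE by auto
    show "(\<lambda>x. E (S x)) \<in> borel_measurable G'"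
    proof (rule measurableI)
      fix x assume "x \<in> space G'" then show "E (S x) \<in> space borel" by simp
    next
      fix B :: "real set" assume B: "B \<in> sets borel"
      have "E -` B \<inter> space Gs \<in> sets Gs" using measurable_sets[OF EGs B] .
      moreover have "(\<lambda>x. E (S x)) -` B \<inter> space G' = S -` (E -` B \<inter> space Gs) \<inter> space M"
        using spGs spG' measurable_space[OF Sm] by auto
      ultimately show "(\<lambda>x. E (S x)) -` B \<inter> space G' \<in> sets G'" unfolding sG' S_def
        by (intro CollectI exI[of _ "E -` B \<inter> space Gs"]) auto
    qed
    fix A' assume "A' \<in> sets G'"
    then obtain A where A: "A \<in> sets Gs" "A' = S -` A \<inter> space M" unfolding sG' S_def by auto
    have AM[measurable]: "A \<in> sets M" using A(1) Gs.subalg by (auto simp: subalgebra_def)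
    have ind: "indicator A' x = (indicator A (S x) :: real)" if "x \<in> space M" for x
      using that A(2) by (auto simp: indicator_def)
    have "(\<integral>x\<in>A'. f (S x) \<partial>M) = (\<integral>x. indicator A (S x) * f (S x) \<partial>M)"
      unfolding set_lebesgue_integral_def by (rule Bochner_Integration.integral_cong) (auto simp: ind)
    also have "\<dots> = (\<integral>x. indicator A x * f x \<partial>M)"
      unfolding S_def by (rule integral_Tn[of "\<lambda>x. indicator A x * f x" n]) measurable
    also have "\<dots> = (\<integral>x\<in>A. f x \<partial>M)" unfolding set_lebesgue_integral_def by simp
    also have "\<dots> = (\<integral>x\<in>A. E x \<partial>M)" unfolding E_def by (rule Gs.real_cond_exp_intA[OF f A(1)])
    also have "\<dots> = (\<integral>x. indicator A x * E x \<partial>M)" unfolding set_lebesgue_integral_def by simp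
    also have "\<dots> = (\<integral>x. indicator A (S x) * E (S x) \<partial>M)"
      unfolding S_def by (rule integral_Tn[of "\<lambda>x. indicator A x * E x" n, symmetric]) measurable
    also have "\<dots> = (\<integral>x\<in>A'. E (S x) \<partial>M)"
      unfolding set_lebesgue_integral_def by (rule Bochner_Integration.integral_cong) (auto simp: ind)
    finally show "(\<integral>x\<in>A'. f (S x) \<partial>M) = (\<integral>x\<in>A'. E (S x) \<partial>M)" .
  qed
qed

end

lemma space_seq_space[simp]: "space seq_space = UNIV"
  unfolding seq_space_def by (simp add: space_PiM)

lemma shift_meas_seq: "shift \<in> measurable seq_space seq_space"
  unfolding seq_space_def shift_def
  by (rule measurable_PiM_single') (auto intro!: measurable_component_singleton)

lemma coord_meas: "(\<lambda>\<omega>. \<omega> j) \<in> measurable seq_space (count_space UNIV)"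
  unfolding seq_space_def by (rule measurable_component_singleton) simp

lemma funpow_shift: "(shift ^^ n) \<omega> = (\<lambda>m. \<omega> (m + int n))"
  by (induction n arbitrary: \<omega>) (auto simp: shift_def funpow_swap1 algebra_simps)



definition gens :: "int set \<Rightarrow> (int \<Rightarrow> 'a) set set" where
  "gens J = {(\<lambda>\<omega>. \<omega> j) -` B | j B. j \<in> J}"

lemma coord_sets_gens: "coord_sets J = sigma_sets UNIV (gens J)"
  unfolding coord_sets_def gens_def ..

lemma gens_sub: "gens J \<subseteq> sets seq_space"
proof
  fix A assume "A \<in> gens J"
  then obtain j B where A: "A = (\<lambda>\<omega>. \<omega> j) -` B" unfolding gens_def by auto
  have "(\<lambda>\<omega>. \<omega> j) -` B \<inter> space seq_space \<in> sets seq_space"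
    by (rule measurable_sets[OF coord_meas]) simp
  then show "A \<in> sets seq_space" using A by simp
qed

lemma coord_sets_sub: "coord_sets J \<subseteq> sets seq_space"
  unfolding coord_sets_gens
  using sets.sigma_sets_subset[OF gens_sub, of J] by simp

lemma sets_join: "sets (join_alg J D) = sigma_sets UNIV (coord_sets J \<union> D)"
  unfolding join_alg_def by (rule sets_measure_of) simp

lemma space_join: "space (join_alg J D) = UNIV"
  unfolding join_alg_def by (simp add: space_measure_of_conv)

lemma join_sub:
  assumes "D \<subseteq> sets seq_space"
  shows "sets (join_alg J D) \<subseteq> sets seq_space"
  unfolding sets_join using sets.sigma_sets_subset[of "coord_sets J \<union> D" seq_space] coord_sets_sub assms by auto

lemma join_mono:
  assumes "J \<subseteq> J'"
  shows "sets (join_alg J D) \<subseteq> sets (join_alg J' D)"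
proof -
  have "coord_sets J \<subseteq> coord_sets J'" unfolding coord_sets_gens gens_def
    using assms by (intro sigma_sets_subseteq) blast
  then have "coord_sets J \<union> D \<subseteq> sigma_sets UNIV (coord_sets J' \<union> D)"
    using sigma_sets.Basic[of _ "coord_sets J' \<union> D" UNIV] by blast
  then show ?thesis unfolding sets_join by (rule sigma_sets_mono)
qed

lemma join_sfs:
  assumes "prob_space \<mu>" "sets \<mu> = sets seq_space" "D \<subseteq> sets seq_space"
  shows "sigma_finite_subalgebra \<mu> (join_alg J D)"
proof -
  interpret prob_space \<mu> by (rule assms(1))
  have sp: "space \<mu> = UNIV" using sets_eq_imp_space_eq[OF assms(2)] by simp
  have "subalgebra \<mu> (join_alg J D)"
    unfolding subalgebra_def using join_sub[OF assms(3), of J] assms(2) by (simp add: sp space_join)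
  then have "finite_measure_subalgebra \<mu> (join_alg J D)"
    by (intro finite_measure_subalgebra.intro finite_measure_subalgebra_axioms.intro) (auto intro: finite_measure_axioms)
  then show ?thesis by (rule finite_measure_subalgebra_is_sigma_finite)
qed

lemma shift_surj: "surj shift"
proof -
  have "shift (\<lambda>m. \<omega> (m - 1)) = \<omega>" for \<omega> :: "int \<Rightarrow> 'a" unfolding shift_def by simp
  then show ?thesis by (intro surjI[where f="\<lambda>\<omega> m. \<omega> (m - 1)"]) simp
qed

lemma shift_inj: "inj shift"
proof (rule injI)
  fix x y :: "int \<Rightarrow> 'a" assume "shift x = shift y"
  note eq = this
  have "x m = y m" for m using fun_cong[OF eq, of "m - 1"] by (simp add: shift_def)
  then show "x = y" by auto
qed

lemma D_shift1:
  assumes DS: "D \<subseteq> sets seq_space" and inv: "\<forall>S \<in> sets seq_space. S \<in> D \<longleftrightarrow> shift ` S \<in> D"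
  shows "(\<lambda>A. shift -` A) ` D = D"
proof
  show "(\<lambda>A. shift -` A) ` D \<subseteq> D"
  proof
    fix X assume "X \<in> (\<lambda>A. shift -` A) ` D"
    then obtain A where A: "A \<in> D" "X = shift -` A" by auto
    have "shift -` A \<inter> space seq_space \<in> sets seq_space"
      using measurable_sets[OF shift_meas_seq] A DS by auto
    then have m: "shift -` A \<in> sets seq_space" by simp
    have "shift ` (shift -` A) = A" by (metis shift_surj image_vimage_eq Int_UNIV_right)
    moreover have "shift -` A \<in> D \<longleftrightarrow> shift ` (shift -` A) \<in> D" using inv m by blast
    ultimately show "X \<in> D" using A by simp
  qed
  show "D \<subseteq> (\<lambda>A. shift -` A) ` D"
  proof
    fix A assume A: "A \<in> D"
    then have "shift ` A \<in> D" using inv DS by auto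
    moreover have "shift -` (shift ` A) = A" by (metis shift_inj inj_vimage_image_eq)
    ultimately show "A \<in> (\<lambda>A. shift -` A) ` D" by (metis image_eqI)
  qed
qed

lemma D_shift:
  assumes DS: "D \<subseteq> sets seq_space" and inv: "\<forall>S \<in> sets seq_space. S \<in> D \<longleftrightarrow> shift ` S \<in> D"
  shows "(\<lambda>A. (shift^^n) -` A) ` D = D"
proof (induction n)
  case 0 then show ?case by simp
next
  case (Suc n)
  have eq: "(shift^^Suc n) -` A = (shift^^n) -` (shift -` A)" for A :: "(int \<Rightarrow> 'a) set"
    by (simp only: funpow.simps vimage_comp)
  have "(\<lambda>A. (shift^^Suc n) -` A) ` D = (\<lambda>B. (shift^^n) -` B) ` ((\<lambda>A. shift -` A) ` D)"
    unfolding eq image_image ..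
  also have "\<dots> = D" unfolding D_shift1[OF DS inv] Suc ..
  finally show ?case .
qed

lemma gens_shift: "(\<lambda>A. (shift^^n) -` A \<inter> UNIV) ` gens J = gens ((\<lambda>j. j + int n) ` J)"
proof -
  have pre: "(shift^^n) -` ((\<lambda>\<omega>. \<omega> j) -` B) = (\<lambda>\<omega>. \<omega> (j + int n)) -` B" for j B
    by (auto simp: funpow_shift)
  show ?thesis unfolding gens_def
  proof (intro equalityI subsetI)
    fix X assume "X \<in> (\<lambda>A. (shift^^n) -` A \<inter> UNIV) ` {(\<lambda>\<omega>. \<omega> j) -` B | j B. j \<in> J}"
    then obtain j B where jB: "j \<in> J" "X = (shift^^n) -` ((\<lambda>\<omega>. \<omega> j) -` B)" by auto
    have "j + int n \<in> (\<lambda>j. j + int n) ` J" using jB(1) by simp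
    moreover have "X = (\<lambda>\<omega>. \<omega> (j + int n)) -` B" using jB(2) pre by simp
    ultimately show "X \<in> {(\<lambda>\<omega>. \<omega> j) -` B | j B. j \<in> (\<lambda>j. j + int n) ` J}" by blast
  next
    fix X assume "X \<in> {(\<lambda>\<omega>. \<omega> j) -` B | j B. j \<in> (\<lambda>j. j + int n) ` J}"
    then obtain j B where jB: "j \<in> J" "X = (\<lambda>\<omega>. \<omega> (j + int n)) -` B" by auto
    have "X = (shift^^n) -` ((\<lambda>\<omega>. \<omega> j) -` B) \<inter> UNIV" using jB(2) pre[of j B] by simp
    moreover have "(\<lambda>\<omega>. \<omega> j) -` B \<in> {(\<lambda>\<omega>. \<omega> j) -` B | j B. j \<in> J}" using jB(1) by blast
    ultimately show "X \<in> (\<lambda>A. (shift^^n) -` A \<inter> UNIV) ` {(\<lambda>\<omega>. \<omega> j) -` B | j B. j \<in> J}"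
      by (rule image_eqI)
  qed
qed

lemma join_shift:
  assumes DS: "D \<subseteq> sets seq_space" and inv: "\<forall>S \<in> sets seq_space. S \<in> D \<longleftrightarrow> shift ` S \<in> D"
  shows "{(shift^^n) -` A \<inter> UNIV | A. A \<in> sets (join_alg J D)} = sets (join_alg ((\<lambda>j. j + int n) ` J) D)"
proof -
  let ?S = "shift^^n :: (int \<Rightarrow> 'a) \<Rightarrow> _"
  have f: "?S \<in> UNIV \<rightarrow> UNIV" by simp
  have c: "(\<lambda>A. ?S -` A \<inter> UNIV) ` coord_sets J = coord_sets ((\<lambda>j. j + int n) ` J)"
    using sigma_sets_vimage_commute[OF f, of "gens J"]
    unfolding coord_sets_gens Setcompr_eq_image gens_shift .
  have dd: "(\<lambda>A. ?S -` A \<inter> UNIV) ` D = D" using D_shift[OF DS inv, of n] by simp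
  have eq: "(\<lambda>A. ?S -` A \<inter> UNIV) ` (coord_sets J \<union> D) = coord_sets ((\<lambda>j. j + int n) ` J) \<union> D"
    unfolding image_Un c dd ..
  show ?thesis using sigma_sets_vimage_commute[OF f, of "coord_sets J \<union> D"]
    unfolding sets_join Setcompr_eq_image eq .
qed

lemma img1: "(\<lambda>j. j + int n) ` {- int n..<0} = {0..<int n}"
proof (intro equalityI subsetI)
  fix x assume "x \<in> {0..<int n}"
  then show "x \<in> (\<lambda>j. j + int n) ` {- int n..<0}" by (intro image_eqI[of _ _ "x - int n"]) auto
qed auto

lemma img2: "(\<lambda>j. j + int n) ` {..<0} = {..<int n}"
proof (intro equalityI subsetI)
  fix x assume "x \<in> {..<int n}"
  then show "x \<in> (\<lambda>j. j + int n) ` {..<0}" by (intro image_eqI[of _ _ "x - int n"]) auto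
qed auto

lemma join_gen:
  assumes DS: "D \<subseteq> sets seq_space"
  shows "sets (join_alg {..<0} D) = sigma_sets UNIV (\<Union>k. sets (join_alg {- int k..<0} D))"
proof
  have "(\<Union>k. sets (join_alg {- int k..<0} D)) \<subseteq> sets (join_alg {..<0} D)"
  proof -
    have "sets (join_alg {- int k..<0} D) \<subseteq> sets (join_alg {..<0} D)" for k
      by (rule join_mono) auto
    then show ?thesis by blast
  qed
  from sets.sigma_sets_subset[OF this]
  show "sigma_sets UNIV (\<Union>k. sets (join_alg {- int k..<0} D)) \<subseteq> sets (join_alg {..<0} D)"
    by (simp add: space_join)
next
  let ?U = "\<Union>k. sets (join_alg {- int k..<0} D)"
  have g: "gens {..<0} \<subseteq> ?U"
  proof
    fix A :: "(int \<Rightarrow> 'a) set" assume "A \<in> gens {..<0}"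
    then obtain j B where jB: "j < 0" "A = (\<lambda>\<omega>. \<omega> j) -` B" unfolding gens_def by auto
    then have "A \<in> gens {- int (nat (-j))..<0}" unfolding gens_def by auto
    then have "A \<in> coord_sets {- int (nat (-j))..<0}" unfolding coord_sets_gens by (rule sigma_sets.Basic)
    then have "A \<in> coord_sets {- int (nat (-j))..<0} \<union> D" by simp
    then have "A \<in> sets (join_alg {- int (nat (-j))..<0} D)" unfolding sets_join by (rule sigma_sets.Basic)
    then show "A \<in> ?U" by (rule UN_I[OF UNIV_I])
  qed
  have "coord_sets {..<0} \<subseteq> sigma_sets UNIV ?U" unfolding coord_sets_gens by (rule sigma_sets_subseteq[OF g])
  moreover have "D \<subseteq> sigma_sets UNIV ?U"
  proof
    fix A assume "A \<in> D"
    then have "A \<in> coord_sets {- int 0..<0} \<union> D" by simp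
    then have "A \<in> sets (join_alg {- int 0..<0} D)" unfolding sets_join by (rule sigma_sets.Basic)
    then have "A \<in> ?U" by (rule UN_I[OF UNIV_I])
    then show "A \<in> sigma_sets UNIV ?U" by (rule sigma_sets.Basic)
  qed
  ultimately have "coord_sets {..<0} \<union> D \<subseteq> sigma_sets UNIV ?U" by auto
  then show "sets (join_alg {..<0} D) \<subseteq> sigma_sets UNIV ?U" unfolding sets_join by (rule sigma_sets_mono)
qed



lemma dist_max_nonneg: "0 \<le> dist_max (p :: 'a::finite \<Rightarrow> real) q"
proof -
  have "dist_max p q \<in> range (\<lambda>a. \<bar>p a - q a\<bar>)" unfolding dist_max_def by (rule Max_in) auto
  then show ?thesis by auto
qed

lemma dist_max_le_sum: "dist_max (p :: 'a::finite \<Rightarrow> real) q \<le> (\<Sum>a\<in>UNIV. \<bar>p a - q a\<bar>)"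
proof -
  have "dist_max p q \<in> range (\<lambda>a. \<bar>p a - q a\<bar>)" unfolding dist_max_def by (rule Max_in) auto
  then obtain a where "dist_max p q = \<bar>p a - q a\<bar>" by auto
  also have "\<dots> \<le> (\<Sum>a\<in>UNIV. \<bar>p a - q a\<bar>)" by (rule member_le_sum) auto
  finally show ?thesis .
qed

lemma (in prob_space) AE_small_sets:
  assumes "\<And>d. d > 0 \<Longrightarrow> \<exists>E\<in>sets M. measure M E \<le> d \<and> (AE x in M. P x \<or> x \<in> E)"
  shows "AE x in M. P x"
proof -
  have "\<forall>i::nat. \<exists>E. E \<in> sets M \<and> measure M E \<le> 1 / (real i + 1) \<and> (AE x in M. P x \<or> x \<in> E)"
  proof
    fix i :: nat
    have "1 / (real i + 1) > 0" by simp
    then show "\<exists>E. E \<in> sets M \<and> measure M E \<le> 1 / (real i + 1) \<and> (AE x in M. P x \<or> x \<in> E)"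
      using assms by blast
  qed
  from choice[OF this] obtain E where E': "\<forall>i. E i \<in> sets M \<and> measure M (E i) \<le> 1 / (real i + 1) \<and> (AE x in M. P x \<or> x \<in> E i)"
    by blast
  then have E: "\<And>i. E i \<in> sets M" "\<And>i. measure M (E i) \<le> 1 / (real i + 1)"
    "\<And>i. AE x in M. P x \<or> x \<in> E i" by auto
  define N where "N = (\<Inter>i. E i)"
  have Nm: "N \<in> sets M" unfolding N_def using E(1) by auto
  have "measure M N \<le> 1 / (real i + 1)" for i
  proof -
    have "N \<subseteq> E i" unfolding N_def by auto
    then have "measure M N \<le> measure M (E i)" using E(1) by (intro finite_measure_mono)
    then show ?thesis using E(2)[of i] by linarith
  qed
  then have "measure M N \<le> 0"
    by (intro LIMSEQ_le_const[OF LIMSEQ_inverse_real_of_nat]) (auto simp: inverse_eq_divide add.commute)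
  then have "N \<in> null_sets M" using Nm by (simp add: null_sets_def emeasure_eq_measure measure_nonneg antisym)
  then have "AE x in M. x \<notin> N" using AE_not_in by blast
  moreover have "AE x in M. \<forall>i. P x \<or> x \<in> E i" unfolding AE_all_countable using E(3) by blast
  ultimately show ?thesis unfolding N_def by eventually_elim auto
qed

lemma sum_split_bound:
  fixes tm Z :: "nat \<Rightarrow> real"
  assumes "\<And>n. tm n \<le> C" "\<And>n. n \<ge> k \<Longrightarrow> tm n \<le> Z n" "\<And>n. 0 \<le> Z n" "0 \<le> C"
  shows "(\<Sum>n<N. tm n) \<le> real k * C + (\<Sum>n<N. Z n)"
proof -
  have "(\<Sum>n<N. tm n) \<le> real (min N k) * C + (\<Sum>n<N. Z n)"
  proof (induction N)
    case 0 then show ?case by simp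
  next
    case (Suc N)
    show ?case
    proof (cases "N < k")
      case True
      then have "min (Suc N) k = Suc (min N k)" by auto
      then show ?thesis using Suc assms(1)[of N] assms(3)[of N] by (simp add: algebra_simps)
    next
      case False
      then have "min (Suc N) k = min N k" by auto
      then show ?thesis using Suc assms(2)[of N] False by simp
    qed
  qed
  also have "real (min N k) * C \<le> real k * C" using assms(4) by (intro mult_right_mono) auto
  finally show ?thesis by simp
qed



lemma aux_cancel: "(x::real) \<noteq> 0 \<Longrightarrow> x * (y / (2 * x)) = y / 2"
  by (simp add: field_simps)

lemma pointwise_bound:
  fixes rn rk ri :: "'a::finite \<Rightarrow> real"
  assumes b: "\<forall>a. 0 \<le> rn a \<and> rn a \<le> 1 \<and> 0 \<le> ri a \<and> ri a \<le> 1" and lam: "0 \<le> lam"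
    and alt: "(\<forall>a. \<bar>rn a - rk a\<bar> \<le> lam) \<or> Ob"
  shows "dist_max rn ri \<le> min (2 * real CARD('a)) (real CARD('a) * lam + 2 * real CARD('a) * (if Ob then 1 else 0) + (\<Sum>a\<in>UNIV. \<bar>rk a - ri a\<bar>))"
proof -
  have d: "dist_max rn ri \<le> (\<Sum>a\<in>UNIV. \<bar>rn a - ri a\<bar>)" by (rule dist_max_le_sum)
  have le2: "\<bar>rn a - ri a\<bar> \<le> 2" for a
  proof -
    have "0 \<le> rn a" "rn a \<le> 1" "0 \<le> ri a" "ri a \<le> 1" using b by auto
    then show ?thesis by (auto simp: abs_le_iff)
  qed
  have "(\<Sum>a\<in>UNIV. \<bar>rn a - ri a\<bar>) \<le> (\<Sum>a\<in>(UNIV::'a set). (2::real))"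
    by (rule sum_mono) (rule le2)
  then have c1: "dist_max rn ri \<le> 2 * real CARD('a)" using d by simp
  have s0: "0 \<le> (\<Sum>a\<in>UNIV. \<bar>rk a - ri a\<bar>)" by (intro sum_nonneg) auto
  show ?thesis
  proof (cases Ob)
    case True
    then show ?thesis using c1 s0 lam by simp
  next
    case False
    then have bb: "\<forall>a. \<bar>rn a - rk a\<bar> \<le> lam" using alt by auto
    have "(\<Sum>a\<in>UNIV. \<bar>rn a - ri a\<bar>) \<le> (\<Sum>a\<in>UNIV. lam + \<bar>rk a - ri a\<bar>)"
      by (intro sum_mono) (use bb in \<open>smt (verit)\<close>)
    also have "\<dots> = real CARD('a) * lam + (\<Sum>a\<in>UNIV. \<bar>rk a - ri a\<bar>)" by (simp add: sum.distrib)
    finally show ?thesis using c1 d False by simp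
  qed
qed

theorem lemma1:
  fixes \<mu> :: "(int \<Rightarrow> 'a::finite) measure"
    and D :: "(int \<Rightarrow> 'a) set set"
  assumes "prob_space \<mu>"
    and "sets \<mu> = sets seq_space"
    and "distr \<mu> seq_space shift = \<mu>"
    and "sigma_algebra UNIV D"
    and "D \<subseteq> sets seq_space"
    and "\<forall>S \<in> sets seq_space. S \<in> D \<longleftrightarrow> shift ` S \<in> D"
  shows "AE \<omega> in \<mu>.
    (\<lambda>N. (\<Sum>n<N. dist_max (cond_dist \<mu> (join_alg {0..<int n} D) (int n) \<omega>)
                             (cond_dist \<mu> (join_alg {..<int n} D) (int n) \<omega>)) / real N)
      \<longlonglongrightarrow> 0"
proof -
  interpret P: prob_space \<mu> by (rule assms(1))
  have sp: "space \<mu> = UNIV" using sets_eq_imp_space_eq[OF assms(2)] by simp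
  have shm: "shift \<in> measurable \<mu> \<mu>"
    using shift_meas_seq measurable_cong_sets[OF assms(2) assms(2)] by simp
  have dinv: "distr \<mu> \<mu> shift = \<mu>"
    using distr_cong[of \<mu> \<mu> \<mu> seq_space shift shift] assms(2,3) by simp
  interpret T: mpt \<mu> shift by (intro mpt.intro mpt_axioms.intro assms(1) shm dinv)
  define G where "G = (\<lambda>k::nat. join_alg {- int k..<0} D)"
  define Gi where "Gi = join_alg {..<0} D"
  have sfs: "\<And>J. sigma_finite_subalgebra \<mu> (join_alg J D)" by (rule join_sfs[OF assms(1,2,5)])
  interpret F: filt \<mu> G Gi
  proof (intro filt.intro filt_axioms.intro assms(1))
    show "\<And>k. sigma_finite_subalgebra \<mu> (G k)" unfolding G_def by (rule sfs)
    show "\<And>j k. j \<le> k \<Longrightarrow> sets (G j) \<subseteq> sets (G k)" unfolding G_def by (rule join_mono) auto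
    show "sigma_finite_subalgebra \<mu> Gi" unfolding Gi_def by (rule sfs)
    show "sets Gi = sigma_sets (space \<mu>) (\<Union>k. sets (G k))"
      unfolding Gi_def G_def sp by (rule join_gen[OF assms(5)])
  qed
  define f where "f = (\<lambda>a::'a. indicator {\<omega>::int\<Rightarrow>'a. \<omega> 0 = a} :: (int \<Rightarrow> 'a) \<Rightarrow> real)"
  have fset: "{\<omega>::int\<Rightarrow>'a. \<omega> 0 = a} \<in> sets \<mu>" for a
  proof -
    have "(\<lambda>\<omega>. \<omega> 0) -` {a} \<inter> space seq_space \<in> sets seq_space"
      by (rule measurable_sets[OF coord_meas]) simp
    then show ?thesis using assms(2) by (simp add: vimage_def)
  qed
  have fm[measurable]: "f a \<in> borel_measurable \<mu>" for a unfolding f_def by (rule borel_measurable_indicator[OF fset])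
  have fi: "integrable \<mu> (f a)" for a
    using fm[of a, unfolded f_def] by (intro P.integrable_const_bound[where B=1]) (auto simp: f_def)
  define r where "r = (\<lambda>k a. real_cond_exp \<mu> (G k) (f a))"
  define ri where "ri = (\<lambda>a. real_cond_exp \<mu> Gi (f a))"
  have rm[measurable]: "r k a \<in> borel_measurable \<mu>" for k a unfolding r_def by (rule borel_measurable_cond_exp2)
  have rim[measurable]: "ri a \<in> borel_measurable \<mu>" for a unfolding ri_def by (rule borel_measurable_cond_exp2)
  have ri_int: "integrable \<mu> (ri a)" for a
    unfolding ri_def by (rule sigma_finite_subalgebra.real_cond_exp_int(1)[OF F.Ginf fi])
  have r_int: "integrable \<mu> (r k a)" for k a
    unfolding r_def by (rule sigma_finite_subalgebra.real_cond_exp_int(1)[OF F.G fi])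
  define tm where "tm = (\<lambda>n \<omega>. dist_max (cond_dist \<mu> (join_alg {0..<int n} D) (int n) \<omega>) (cond_dist \<mu> (join_alg {..<int n} D) (int n) \<omega>))"
  have tr1: "AE \<omega> in \<mu>. cond_dist \<mu> (join_alg {0..<int n} D) (int n) \<omega> a = r n a ((shift^^n) \<omega>)" for n a
  proof -
    have sG': "sets (join_alg {0..<int n} D) = {(shift^^n) -` A \<inter> space \<mu> | A. A \<in> sets (G n)}"
      using join_shift[OF assms(5,6), of n "{- int n..<0}"] unfolding img1 sp G_def by simp
    have eqf: "(\<lambda>x. f a ((shift^^n) x)) = indicator {\<omega>'. \<omega>' (int n) = a}"
      by (auto simp: f_def funpow_shift indicator_def fun_eq_iff)
    have "AE x in \<mu>. real_cond_exp \<mu> (join_alg {0..<int n} D) (\<lambda>x. f a ((shift^^n) x)) x = real_cond_exp \<mu> (G n) (f a) ((shift^^n) x)"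
      by (rule T.cond_exp_transfer[OF F.G sfs sG' fi])
    then show ?thesis unfolding eqf cond_dist_def r_def .
  qed
  have tr2: "AE \<omega> in \<mu>. cond_dist \<mu> (join_alg {..<int n} D) (int n) \<omega> a = ri a ((shift^^n) \<omega>)" for n a
  proof -
    have sG': "sets (join_alg {..<int n} D) = {(shift^^n) -` A \<inter> space \<mu> | A. A \<in> sets Gi}"
      using join_shift[OF assms(5,6), of n "{..<0}"] unfolding img2 sp Gi_def by simp
    have eqf: "(\<lambda>x. f a ((shift^^n) x)) = indicator {\<omega>'. \<omega>' (int n) = a}"
      by (auto simp: f_def funpow_shift indicator_def fun_eq_iff)
    have "AE x in \<mu>. real_cond_exp \<mu> (join_alg {..<int n} D) (\<lambda>x. f a ((shift^^n) x)) x = real_cond_exp \<mu> Gi (f a) ((shift^^n) x)"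
      by (rule T.cond_exp_transfer[OF F.Ginf sfs sG' fi])
    then show ?thesis unfolding eqf cond_dist_def ri_def .
  qed
  have AEt: "AE \<omega> in \<mu>. \<forall>n. tm n \<omega> = dist_max (\<lambda>a. r n a ((shift^^n) \<omega>)) (\<lambda>a. ri a ((shift^^n) \<omega>))"
  proof -
    have "AE \<omega> in \<mu>. \<forall>a\<in>UNIV. cond_dist \<mu> (join_alg {0..<int n} D) (int n) \<omega> a = r n a ((shift^^n) \<omega>)
        \<and> cond_dist \<mu> (join_alg {..<int n} D) (int n) \<omega> a = ri a ((shift^^n) \<omega>)" for n
      using tr1 tr2 by (subst AE_finite_all) auto
    then have "AE \<omega> in \<mu>. \<forall>n. \<forall>a\<in>UNIV. cond_dist \<mu> (join_alg {0..<int n} D) (int n) \<omega> a = r n a ((shift^^n) \<omega>)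
        \<and> cond_dist \<mu> (join_alg {..<int n} D) (int n) \<omega> a = ri a ((shift^^n) \<omega>)"
      by (simp add: AE_all_countable)
    then show ?thesis
    proof eventually_elim
      case (elim \<omega>)
      show ?case
      proof
        fix n
        have 1: "cond_dist \<mu> (join_alg {0..<int n} D) (int n) \<omega> = (\<lambda>a. r n a ((shift^^n) \<omega>))"
          using elim by (auto simp: fun_eq_iff)
        have 2: "cond_dist \<mu> (join_alg {..<int n} D) (int n) \<omega> = (\<lambda>a. ri a ((shift^^n) \<omega>))"
          using elim by (auto simp: fun_eq_iff)
        show "tm n \<omega> = dist_max (\<lambda>a. r n a ((shift^^n) \<omega>)) (\<lambda>a. ri a ((shift^^n) \<omega>))"
          unfolding tm_def 1 2 ..
      qed
    qed
  qed
  have bnd0: "AE \<omega> in \<mu>. \<forall>a\<in>UNIV. \<forall>k. 0 \<le> r k a \<omega> \<and> r k a \<omega> \<le> 1 \<and> 0 \<le> ri a \<omega> \<and> ri a \<omega> \<le> 1"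
  proof -
    have f01: "AE x in \<mu>. 0 \<le> f a x" "AE x in \<mu>. f a x \<le> 1" for a by (auto simp: f_def)
    have "AE \<omega> in \<mu>. 0 \<le> r k a \<omega> \<and> r k a \<omega> \<le> 1 \<and> 0 \<le> ri a \<omega> \<and> ri a \<omega> \<le> 1" for k a
    proof -
      have 1: "AE \<omega> in \<mu>. 0 \<le> r k a \<omega>" unfolding r_def
        by (rule sigma_finite_subalgebra.real_cond_exp_ge_c[OF F.G fi f01(1)])
      have 2: "AE \<omega> in \<mu>. r k a \<omega> \<le> 1" unfolding r_def
        by (rule sigma_finite_subalgebra.real_cond_exp_le_c[OF F.G fi f01(2)])
      have 3: "AE \<omega> in \<mu>. 0 \<le> ri a \<omega>" unfolding ri_def
        by (rule sigma_finite_subalgebra.real_cond_exp_ge_c[OF F.Ginf fi f01(1)])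
      have 4: "AE \<omega> in \<mu>. ri a \<omega> \<le> 1" unfolding ri_def
        by (rule sigma_finite_subalgebra.real_cond_exp_le_c[OF F.Ginf fi f01(2)])
      show ?thesis using 1 2 3 4 by eventually_elim auto
    qed
    then show ?thesis by (subst AE_finite_all) (auto simp: AE_all_countable)
  qed
  have bndT: "AE \<omega> in \<mu>. \<forall>n. \<forall>a\<in>UNIV. \<forall>k. 0 \<le> r k a ((shift^^n) \<omega>) \<and> r k a ((shift^^n) \<omega>) \<le> 1
      \<and> 0 \<le> ri a ((shift^^n) \<omega>) \<and> ri a ((shift^^n) \<omega>) \<le> 1"
    using T.AE_Tn[OF bnd0] by (simp add: AE_all_countable)
  define c where "c = real CARD('a)"
  define C where "C = 2 * c"
  have c1: "c \<ge> 1" unfolding c_def by (simp add: Suc_leI)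
  define h where "h = (\<lambda>k y. \<Sum>a\<in>UNIV. \<bar>r k a y - ri a y\<bar>)"
  have hm[measurable]: "h k \<in> borel_measurable \<mu>" for k unfolding h_def by measurable
  define e where "e = (\<lambda>k. \<integral>y. h k y \<partial>\<mu>)"
  have e_eq: "e k = (\<Sum>a\<in>UNIV. \<integral>y. \<bar>ri a y - r k a y\<bar> \<partial>\<mu>)" for k
    unfolding e_def h_def
    by (subst Bochner_Integration.integral_sum) (auto intro!: r_int ri_int simp: abs_minus_commute)
  have e_nn: "e k \<ge> 0" for k unfolding e_def h_def by (intro integral_nonneg_AE) (auto intro!: sum_nonneg)
  have e_lim: "e \<longlonglongrightarrow> 0"
  proof -
    have "(\<lambda>k. \<integral>y. \<bar>ri a y - r k a y\<bar> \<partial>\<mu>) \<longlonglongrightarrow> 0" for a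
    proof -
      have riG: "ri a \<in> borel_measurable Gi" unfolding ri_def by (rule borel_measurable_cond_exp)
      have "(\<lambda>k. F.err k (ri a)) \<longlonglongrightarrow> 0" by (rule F.levy_L1[OF ri_int riG])
      moreover have "F.err k (ri a) = (\<integral>y. \<bar>ri a y - r k a y\<bar> \<partial>\<mu>)" for k
        unfolding F.err_def
      proof (rule integral_cong_AE)
        show "AE x in \<mu>. \<bar>ri a x - real_cond_exp \<mu> (G k) (ri a) x\<bar> = \<bar>ri a x - r k a x\<bar>"
          using F.tower[OF fi[of a], of k] unfolding ri_def r_def by eventually_elim simp
      qed (auto intro!: borel_measurable_cond_exp2)
      ultimately show ?thesis by simp
    qed
    then have "(\<lambda>k. \<Sum>a\<in>UNIV. \<integral>y. \<bar>ri a y - r k a y\<bar> \<partial>\<mu>) \<longlonglongrightarrow> (\<Sum>a\<in>(UNIV::'a set). 0)"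
      by (intro tendsto_sum) auto
    then show ?thesis unfolding e_eq[symmetric] by (simp add: fun_eq_iff)
  qed
  have main: "AE \<omega> in \<mu>. \<exists>N0. \<forall>N\<ge>N0. (\<Sum>n<N. tm n \<omega>) / real N \<le> eps" if eps: "eps > 0" for eps
  proof (rule P.AE_small_sets)
    fix d :: real assume d: "d > 0"
    define t where "t = eps / 2"
    have t: "t > 0" unfolding t_def using eps by simp
    define lam where "lam = d * t / (2 * c)"
    have lam: "lam > 0" unfolding lam_def using d t c1 by simp
    have Cl: "C / lam + 1 > 0" unfolding C_def using lam c1 by (intro add_nonneg_pos divide_nonneg_pos) auto
    have "d * t / (2 * (C / lam + 1)) > 0" using d t Cl by (intro divide_pos_pos mult_pos_pos) auto
    from LIMSEQ_D[OF e_lim this] obtain k where "norm (e k - 0) < d * t / (2 * (C / lam + 1))" by auto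
    then have ek: "e k \<le> d * t / (2 * (C / lam + 1))" using e_nn[of k] by simp
    define Ob where "Ob = {y\<in>space \<mu>. \<exists>n\<ge>k. \<exists>a. lam < \<bar>r n a y - r k a y\<bar>}"
    define Oa where "Oa = (\<lambda>a. {y\<in>space \<mu>. \<exists>n\<ge>k. lam < \<bar>r n a y - r k a y\<bar>})"
    have Oam[measurable]: "Oa a \<in> sets \<mu>" for a unfolding Oa_def by measurable
    have ObU: "Ob = (\<Union>a\<in>UNIV. Oa a)" unfolding Ob_def Oa_def by auto
    have Obm[measurable]: "Ob \<in> sets \<mu>" unfolding ObU by auto
    have muO: "measure \<mu> Ob \<le> e k / lam"
    proof -
      have "measure \<mu> Ob \<le> (\<Sum>a\<in>UNIV. measure \<mu> (Oa a))" unfolding ObU by (rule measure_UNION_le) auto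
      also have "\<dots> \<le> (\<Sum>a\<in>UNIV. (\<integral>y. \<bar>ri a y - r k a y\<bar> \<partial>\<mu>) / lam)"
      proof (rule sum_mono)
        fix a
        show "measure \<mu> (Oa a) \<le> (\<integral>y. \<bar>ri a y - r k a y\<bar> \<partial>\<mu>) / lam"
          unfolding Oa_def r_def ri_def by (rule F.tail_bound[OF fi lam])
      qed
      also have "\<dots> = e k / lam" unfolding e_eq by (simp add: sum_divide_distrib)
      finally show ?thesis .
    qed
    define Z where "Z = (\<lambda>y. min C (c * lam + C * indicator Ob y + h k y))"
    have Zm[measurable]: "Z \<in> borel_measurable \<mu>" unfolding Z_def by measurable
    have h0: "0 \<le> h k y" for y unfolding h_def by (intro sum_nonneg) auto
    have C0: "0 \<le> C" unfolding C_def using c1 by simp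
    have Z0: "0 \<le> Z y" for y unfolding Z_def using h0[of y] C0 lam c1 by (simp add: indicator_def)
    have ZC: "Z y \<le> C" for y unfolding Z_def by simp
    have intZ: "(\<integral>y. Z y \<partial>\<mu>) \<le> c * lam + C * measure \<mu> Ob + e k"
    proof -
      have ih: "integrable \<mu> (h k)" unfolding h_def by (intro Bochner_Integration.integrable_sum integrable_abs Bochner_Integration.integrable_diff r_int ri_int)
      have iO: "integrable \<mu> (\<lambda>y. C * indicator Ob y)" by (auto simp: less_top[symmetric])
      have "(\<integral>y. Z y \<partial>\<mu>) \<le> (\<integral>y. c * lam + C * indicator Ob y + h k y \<partial>\<mu>)"
      proof (rule integral_mono)
        show "integrable \<mu> Z" using Z0 ZC by (intro P.integrable_const_bound[where B=C]) auto
        show "integrable \<mu> (\<lambda>y. c * lam + C * indicator Ob y + h k y)" using ih iO by auto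
      qed (auto simp: Z_def)
      also have "\<dots> = c * lam + C * measure \<mu> Ob + e k"
        using ih iO unfolding e_def by (simp add: P.prob_space)
      finally show ?thesis .
    qed
    define E where "E = {y\<in>space \<mu>. \<exists>n\<ge>1. (\<Sum>j<n. Z ((shift^^j) y)) > real n * t}"
    have Em[measurable]: "E \<in> sets \<mu>" unfolding E_def by measurable
    have muE: "measure \<mu> E \<le> d"
    proof -
      have "t * measure \<mu> E \<le> (\<integral>y. Z y \<partial>\<mu>)"
        unfolding E_def by (rule T.maximal_ergodic[OF Zm Z0 ZC t])
      also have "\<dots> \<le> c * lam + C * (e k / lam) + e k"
        using intZ muO C0 by (smt (verit) mult_left_mono)
      also have "\<dots> = c * lam + (C / lam + 1) * e k" by (simp add: field_simps)
      also have "(C / lam + 1) * e k \<le> (C / lam + 1) * (d * t / (2 * (C / lam + 1)))"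
        using ek C0 lam by (intro mult_left_mono) auto
      also have "\<dots> = d * t / 2" using Cl by (intro aux_cancel) simp
      also have "c * lam = d * t / 2" unfolding lam_def using c1 by (simp add: field_simps)
      finally have "t * measure \<mu> E \<le> t * d" by (simp add: mult.commute)
      then show ?thesis using t by simp
    qed
    have "AE \<omega> in \<mu>. (\<exists>N0. \<forall>N\<ge>N0. (\<Sum>n<N. tm n \<omega>) / real N \<le> eps) \<or> \<omega> \<in> E"
      using AEt bndT
    proof eventually_elim
      case (elim \<omega>)
      have tmC: "tm n \<omega> \<le> C" and tmZ: "n \<ge> k \<Longrightarrow> tm n \<omega> \<le> Z ((shift^^n) \<omega>)" for n
      proof -
        define y where "y = (shift^^n) \<omega>"
        have b: "\<forall>a. 0 \<le> r n a y \<and> r n a y \<le> 1 \<and> 0 \<le> ri a y \<and> ri a y \<le> 1"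
          using elim(2) unfolding y_def by blast
        have alt: "(\<forall>a. \<bar>r n a y - r k a y\<bar> \<le> lam) \<or> y \<in> Ob" if "n \<ge> k"
          using that unfolding Ob_def sp by (auto simp: not_less)
        have eqt: "tm n \<omega> = dist_max (\<lambda>a. r n a y) (\<lambda>a. ri a y)" using elim(1) unfolding y_def by blast
        have pb: "dist_max (\<lambda>a. r n a y) (\<lambda>a. ri a y) \<le> min (2 * real CARD('a)) (real CARD('a) * lam + 2 * real CARD('a) * (if y \<in> Ob then 1 else 0) + (\<Sum>a\<in>UNIV. \<bar>r k a y - ri a y\<bar>))"
          if "(\<forall>a. \<bar>r n a y - r k a y\<bar> \<le> lam) \<or> y \<in> Ob"
          by (rule pointwise_bound[OF b _ that]) (use lam in simp)
        have pT: "dist_max (\<lambda>a. r n a y) (\<lambda>a. ri a y) \<le> min (2 * real CARD('a)) (real CARD('a) * lam + 2 * real CARD('a) * (if True then 1 else 0) + (\<Sum>a\<in>UNIV. \<bar>r k a y - ri a y\<bar>))"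
          by (rule pointwise_bound[OF b]) (use lam in auto)
        show "tm n \<omega> \<le> C"
          using pT eqt unfolding C_def c_def by simp
        show "tm n \<omega> \<le> Z ((shift^^n) \<omega>)" if "n \<ge> k"
          using pb[OF alt[OF that]] eqt unfolding Z_def y_def[symmetric] C_def c_def h_def
          by (cases "y \<in> Ob") (simp_all add: indicator_def)
      qed
      show ?case
      proof (cases "\<exists>N0. \<forall>N\<ge>N0. (\<Sum>n<N. tm n \<omega>) / real N \<le> eps")
        case True then show ?thesis by blast
      next
        case False
        note nP = False
        define N0 where "N0 = max 1 (nat \<lceil>2 * real k * C / eps\<rceil>)"
        obtain N where N: "N \<ge> N0" "(\<Sum>n<N. tm n \<omega>) / real N > eps" using nP not_le by blast
        have N1: "N \<ge> 1" using N(1) unfolding N0_def by simp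
        have NkC: "2 * real k * C / eps \<le> real N"
        proof -
          have "nat \<lceil>2 * real k * C / eps\<rceil> \<le> N" using N(1) unfolding N0_def by simp
          then have "real (nat \<lceil>2 * real k * C / eps\<rceil>) \<le> real N" by linarith
          moreover have "2 * real k * C / eps \<le> real (nat \<lceil>2 * real k * C / eps\<rceil>)" by (rule real_nat_ceiling_ge)
          ultimately show ?thesis by linarith
        qed
        then have kC: "real k * C \<le> real N * t" unfolding t_def using eps by (simp add: field_simps)
        have "real N * eps < (\<Sum>n<N. tm n \<omega>)" using N(2) N1 by (simp add: field_simps)
        also have "\<dots> \<le> real k * C + (\<Sum>n<N. Z ((shift^^n) \<omega>))"
          by (rule sum_split_bound[where C=C and k=k]) (auto intro: tmC tmZ Z0 C0)
        finally have "real N * t < (\<Sum>n<N. Z ((shift^^n) \<omega>))" using kC unfolding t_def by simp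
        then have "\<omega> \<in> E" unfolding E_def sp using N1 by auto
        then show ?thesis by blast
      qed
    qed
    then show "\<exists>E\<in>sets \<mu>. measure \<mu> E \<le> d \<and> (AE x in \<mu>. (\<exists>N0. \<forall>N\<ge>N0. (\<Sum>n<N. tm n x) / real N \<le> eps) \<or> x \<in> E)"
      using Em muE by blast
  qed
  have "AE \<omega> in \<mu>. \<forall>m::nat. \<exists>N0. \<forall>N\<ge>N0. (\<Sum>n<N. tm n \<omega>) / real N \<le> 1 / (real m + 1)"
    using main by (simp add: AE_all_countable)
  then show ?thesis
  proof eventually_elim
    case (elim \<omega>)
    have "(\<lambda>N. (\<Sum>n<N. tm n \<omega>) / real N) \<longlonglongrightarrow> 0"
    proof (rule LIMSEQ_I)
      fix rr :: real assume rr: "rr > 0"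
      obtain m :: nat where m: "1 / (real m + 1) < rr"
      proof -
        obtain m :: nat where "inverse rr < real m" using reals_Archimedean2 by blast
        then have "1 / (real m + 1) < rr" using rr by (simp add: field_simps)
        then show ?thesis using that by blast
      qed
      obtain N0 where N0: "\<forall>N\<ge>N0. (\<Sum>n<N. tm n \<omega>) / real N \<le> 1 / (real m + 1)" using elim by blast
      have "norm ((\<Sum>n<N. tm n \<omega>) / real N - 0) < rr" if "N \<ge> N0" for N
      proof -
        have "0 \<le> (\<Sum>n<N. tm n \<omega>) / real N" unfolding tm_def by (intro divide_nonneg_nonneg sum_nonneg dist_max_nonneg) auto
        moreover have "(\<Sum>n<N. tm n \<omega>) / real N \<le> 1 / (real m + 1)" using N0 that by blast
        ultimately have "norm ((\<Sum>n<N. tm n \<omega>) / real N - 0) \<le> 1 / (real m + 1)" by simp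
        then show ?thesis using m by linarith
      qed
      then show "\<exists>no. \<forall>N\<ge>no. norm ((\<Sum>n<N. tm n \<omega>) / real N - 0) < rr" by blast
    qed
    then show ?case unfolding tm_def .
  qed
qed


end
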